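(* Let $G=(g_{uv})_{1\le u,v\le m}$ be a symmetric complex matrix with units on the diagonal with $\mathrm{rank}\,G\le 2r$ for an integer $r$, let $0<\varkappa<1$, and suppose that for any $u,v\in[m]$ either $|g_{uv}-1|>\varkappa$ or $|g_{uv}-1|<2^{-4(r+1)}\varkappa$. Let $\mathcal K=\mathcal K(G,\varkappa)$ and let $\succ$ be any ordering of $\mathcal K$ produced by the construction in the context. Then for any two simplices $\sigma,\tau\in\mathcal K$ with $\dim\sigma=\dim\tau=r$ and $\mu(\sigma)=\mu(\tau)$, we have $\sigma\cup\tau\in\mathcal K$.
   Context: $[m]=\{1,\dots,m\}$; $\Gamma(G,\varkappa)$ is the graph on $[m]$ with $\{u,v\}$ an edge iff $|g_{uv}-1|<\varkappa$; $\mathcal K(G,\varkappa)$ is its clique complex; $\dim\sigma=|\sigma|-1$. For a strict total ordering $\succ$ of $\mathcal K$ and non-empty $\sigma$, $\mu(\sigma)$ is the $\succ$-largest facet of $\sigma$. Construction of $\succ$: simplices of larger dimension are larger; vertices are ordered arbitrarily; assuming $\succ$ is defined on $(s-1)$-simplices, for $s$-simplices put $\sigma\succ\tau$ if $\mu(\sigma)\succ\mu(\tau)$; for each $(s-1)$-simplex $\rho$, let $\mathbb V_\rho$ be the set of vertices $v\notin\rho$ with $\rho\cup\{v\}\in\mathcal K$ and $\mu(\rho\cup\{v\})=\rho$, $t=|\mathbb V_\rho|$; choose $v_1,\dots,v_t$ successively: for $j<t$, among pairs $w\ne z$ in $\mathbb V_\rho\setminus\{v_1,\dots,v_{j-1}\}$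 pick a pair $(w^0,z^0)$ maximizing $|g_{wz}-1|$ (ties broken arbitrarily) and set $v_j=w^0$; $v_t$ is the remaining vertex; then put $\rho\cup\{v_1\}\succ\dots\succ\rho\cup\{v_t\}$. *)

theory Defs
  imports "Jordan_Normal_Form.DL_Rank"
begin

text \<open>Vertices are indexed by {0..<m} (JNF matrices are 0-indexed); this is the
paper's [m] shifted by one. g_uv is G $$ (u,v).\<close>

definition adj :: "complex mat \<Rightarrow> real \<Rightarrow> nat \<Rightarrow> nat \<Rightarrow> bool" where
  "adj G \<kappa> u v \<longleftrightarrow> u \<noteq> v \<and> cmod (G $$ (u,v) - 1) < \<kappa>"

definition clique_complex :: "complex mat \<Rightarrow> real \<Rightarrow> nat set set" where
  "clique_complex G \<kappa> = {\<sigma>. \<sigma> \<noteq> {} \<and> \<sigma> \<subseteq> {0..<dim_row G} \<and>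
      (\<forall>u\<in>\<sigma>. \<forall>v\<in>\<sigma>. u \<noteq> v \<longrightarrow> adj G \<kappa> u v)}"

definition facets :: "nat set \<Rightarrow> nat set set" where
  "facets \<sigma> = {\<sigma> - {v} | v. v \<in> \<sigma>}"

definition mu :: "(nat set \<Rightarrow> nat set \<Rightarrow> bool) \<Rightarrow> nat set \<Rightarrow> nat set" where
  "mu succ \<sigma> = (THE \<rho>. \<rho> \<in> facets \<sigma> \<and> (\<forall>\<rho>'\<in>facets \<sigma>. \<rho>' \<noteq> \<rho> \<longrightarrow> succ \<rho> \<rho>'))"

definition strict_total_on :: "'a set \<Rightarrow> ('a \<Rightarrow> 'a \<Rightarrow> bool) \<Rightarrow> bool" where
  "strict_total_on A r \<longleftrightarrow>
     (\<forall>x y. r x y \<longrightarrow> x \<in> A \<and> y \<in> A) \<and>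
     (\<forall>x. \<not> r x x) \<and>
     (\<forall>x y z. r x y \<longrightarrow> r y z \<longrightarrow> r x z) \<and>
     (\<forall>x\<in>A. \<forall>y\<in>A. x \<noteq> y \<longrightarrow> r x y \<or> r y x)"

definition Vset :: "complex mat \<Rightarrow> real \<Rightarrow> (nat set \<Rightarrow> nat set \<Rightarrow> bool) \<Rightarrow> nat set \<Rightarrow> nat set" where
  "Vset G \<kappa> succ \<rho> = {v. v \<notin> \<rho> \<and> insert v \<rho> \<in> clique_complex G \<kappa> \<and> mu succ (insert v \<rho>) = \<rho>}"

text \<open>A list vs = [v_1,...,v_t] (0-indexed) is a valid greedy choice for V: it enumerates V
without repetition, and for every j < t-1 (i.e. every step except the last), there is a
z in the remaining set R_j = V - {v_1..v_(j-1)}, z different from v_j, such that the pair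
(v_j, z) maximizes |g_wz - 1| among pairs of distinct elements of R_j.\<close>
definition greedy_seq :: "complex mat \<Rightarrow> nat set \<Rightarrow> nat list \<Rightarrow> bool" where
  "greedy_seq G V vs \<longleftrightarrow> distinct vs \<and> set vs = V \<and>
     (\<forall>j. j + 1 < length vs \<longrightarrow>
        (let R = V - set (take j vs) in
          \<exists>z\<in>R. z \<noteq> vs ! j \<and>
            (\<forall>w\<in>R. \<forall>z'\<in>R. w \<noteq> z' \<longrightarrow> cmod (G $$ (w,z') - 1) \<le> cmod (G $$ (vs ! j, z) - 1))))"

definition constructed_order :: "complex mat \<Rightarrow> real \<Rightarrow> (nat set \<Rightarrow> nat set \<Rightarrow> bool) \<Rightarrow> bool" where
  "constructed_order G \<kappa> succ \<longleftrightarrow>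
     (let K = clique_complex G \<kappa> in
     strict_total_on K succ \<and>
     \<comment> \<open>simplices of larger dimension are larger\<close>
     (\<forall>\<sigma>\<in>K. \<forall>\<tau>\<in>K. card \<sigma> > card \<tau> \<longrightarrow> succ \<sigma> \<tau>) \<and>
     \<comment> \<open>for s-simplices, s >= 1: mu(sigma) > mu(tau) implies sigma > tau\<close>
     (\<forall>\<sigma>\<in>K. \<forall>\<tau>\<in>K. card \<sigma> = card \<tau> \<longrightarrow> card \<sigma> \<ge> 2 \<longrightarrow>
         succ (mu succ \<sigma>) (mu succ \<tau>) \<longrightarrow> succ \<sigma> \<tau>) \<and>
     \<comment> \<open>ties (same mu = rho) are broken by the greedy sequence\<close>
     (\<forall>\<rho>\<in>K. \<exists>vs. greedy_seq G (Vset G \<kappa> succ \<rho>) vs \<and>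
         (\<forall>i j. i < j \<longrightarrow> j < length vs \<longrightarrow> succ (insert (vs ! i) \<rho>) (insert (vs ! j) \<rho>))))"

end

theory Submission
  imports Defs
begin


lemma exists_kernel:
  fixes G :: "complex mat"
  assumes G: "G \<in> carrier_mat m m" and T: "T \<subseteq> {..<m}" and rk: "vec_space.rank m G < card T"
  shows "\<exists>c. (\<exists>b\<in>T. c b \<noteq> 0) \<and> (\<forall>a<m. (\<Sum>b\<in>T. G $$ (a,b) * c b) = 0)"
proof -
  have finT: "finite T" using T finite_subset by blast
  show ?thesis
  proof (cases "inj_on (col G) T")
    case False
    then obtain a1 a2 where a: "a1 \<in> T" "a2 \<in> T" "a1 \<noteq> a2" "col G a1 = col G a2"
      unfolding inj_on_def by blast
    define c where "c = (\<lambda>b. if b = a1 then (1::complex) else if b = a2 then -1 else 0)"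
    have "\<forall>a<m. (\<Sum>b\<in>T. G $$ (a,b) * c b) = 0"
    proof (intro allI impI)
      fix a assume am: "a < m"
      have "G $$ (a,a1) = G $$ (a,a2)"
        using a(4) am a(1,2) T G by (metis carrier_matD(1,2) col_def index_vec lessThan_iff subsetD)
      moreover have "(\<Sum>b\<in>T. G $$ (a,b) * c b) = G $$ (a,a1) * c a1 + (\<Sum>b\<in>T-{a1}. G $$ (a,b) * c b)"
        using finT a(1) by (simp add: sum.remove)
      moreover have "(\<Sum>b\<in>T-{a1}. G $$ (a,b) * c b) = G $$ (a,a2) * c a2 + (\<Sum>b\<in>T-{a1}-{a2}. G $$ (a,b) * c b)"
        using sum.remove[of "T-{a1}" a2 "\<lambda>b. G $$ (a,b) * c b"] finT a(2,3) by blast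
      moreover have "(\<Sum>b\<in>T-{a1}-{a2}. G $$ (a,b) * c b) = 0"
        by (rule sum.neutral) (auto simp: c_def)
      moreover have "c a1 = 1" "c a2 = -1" using a(3) by (auto simp: c_def)
      ultimately show "(\<Sum>b\<in>T. G $$ (a,b) * c b) = 0" by (simp only:) simp
    qed
    moreover have "c a1 \<noteq> 0" by (simp add: c_def)
    ultimately show ?thesis using a(1) by blast
  next
    case True
    interpret vs: vec_space "TYPE(complex)" m .
    define U where "U = col G ` T"
    have cardU: "card U = card T" using True by (simp add: U_def card_image)
    have Usub: "U \<subseteq> set (cols G)" using T G unfolding U_def by (auto simp: cols_def)
    have Ucar: "U \<subseteq> carrier_vec m" using T G unfolding U_def by auto
    have finU: "finite U" using finT U_def by simp
    have "\<not> vs.lin_indpt U"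
    proof
      assume "vs.lin_indpt U"
      from vs.rank_ge_card_indpt[OF G Usub this] cardU rk show False by simp
    qed
    then have "vs.lin_dep U" by simp
    from vs.finite_lin_dep[OF finU this] Ucar obtain f u where
      f: "vs.lincomb f U = 0\<^sub>v m" "u \<in> U" "f u \<noteq> 0" by auto
    define c where "c = (\<lambda>b. f (col G b))"
    have "\<forall>a<m. (\<Sum>b\<in>T. G $$ (a,b) * c b) = 0"
    proof (intro allI impI)
      fix a assume am: "a < m"
      have "0 = vs.lincomb f U $ a" using f(1) am by simp
      also have "\<dots> = (\<Sum>x\<in>U. f x * x $ a)" by (rule vs.lincomb_index[OF am Ucar])
      also have "\<dots> = (\<Sum>b\<in>T. f (col G b) * col G b $ a)"
        unfolding U_def by (rule sum.reindex[OF True, unfolded comp_def])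
      also have "\<dots> = (\<Sum>b\<in>T. G $$ (a,b) * c b)"
        by (rule sum.cong) (use T G am in \<open>auto simp: c_def\<close>)
      finally show "(\<Sum>b\<in>T. G $$ (a,b) * c b) = 0" by simp
    qed
    moreover obtain b where "b \<in> T" "u = col G b" using f(2) U_def by blast
    then have "c b \<noteq> 0" using f(3) by (simp add: c_def)
    ultimately show ?thesis using \<open>b \<in> T\<close> by blast
  qed
qed




lemma row_bound:
  fixes e c :: "nat \<Rightarrow> complex" and \<beta> :: "nat \<Rightarrow> real"
  assumes fin: "finite T" and b0: "b0 \<in> T" and S: "cmod (\<Sum>b\<in>T. e b * c b) \<le> \<eta>"
    and each: "\<forall>b\<in>T-{b0}. cmod (e b) * cmod (c b) \<le> \<delta> * cmod (c b) + \<beta> b"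
    and bnn: "\<forall>b\<in>T. 0 \<le> \<beta> b" and d0: "0 \<le> \<delta>"
  shows "cmod (e b0) * cmod (c b0) \<le> \<eta> + \<delta> * (\<Sum>b\<in>T. cmod (c b)) + (\<Sum>b\<in>T. \<beta> b)"
proof -
  have split: "(\<Sum>b\<in>T. e b * c b) = e b0 * c b0 + (\<Sum>b\<in>T-{b0}. e b * c b)"
    using fin b0 by (simp add: sum.remove)
  have "cmod (e b0 * c b0) \<le> cmod (\<Sum>b\<in>T. e b * c b) + cmod (\<Sum>b\<in>T-{b0}. e b * c b)"
    using split norm_triangle_ineq4[of "\<Sum>b\<in>T. e b * c b" "\<Sum>b\<in>T-{b0}. e b * c b"] by simp
  also have "cmod (\<Sum>b\<in>T-{b0}. e b * c b) \<le> (\<Sum>b\<in>T-{b0}. cmod (e b) * cmod (c b))"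
    by (rule order.trans[OF norm_sum]) (simp add: norm_mult)
  also have "\<dots> \<le> (\<Sum>b\<in>T-{b0}. \<delta> * cmod (c b) + \<beta> b)"
    by (rule sum_mono) (use each in auto)
  also have "\<dots> = \<delta> * (\<Sum>b\<in>T-{b0}. cmod (c b)) + (\<Sum>b\<in>T-{b0}. \<beta> b)"
    by (simp add: sum.distrib sum_distrib_left)
  also have "(\<Sum>b\<in>T-{b0}. cmod (c b)) \<le> (\<Sum>b\<in>T. cmod (c b))"
    by (rule sum_mono2) (use fin in auto)
  also have "(\<Sum>b\<in>T-{b0}. \<beta> b) \<le> (\<Sum>b\<in>T. \<beta> b)"
    by (rule sum_mono2) (use fin bnn in auto)
  finally show ?thesis using S d0 by (simp add: norm_mult mult_left_mono)
qed

lemma sum_ind: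
  assumes "finite T" "finite L" "z ` L \<subseteq> T"
  shows "(\<Sum>b\<in>T. \<Sum>l\<in>L. if b = z l then f l else (0::real)) = (\<Sum>l\<in>L. f l)"
proof -
  have "(\<Sum>b\<in>T. \<Sum>l\<in>L. if b = z l then f l else (0::real)) = (\<Sum>l\<in>L. \<Sum>b\<in>T. if b = z l then f l else 0)"
    by (rule sum.swap)
  also have "\<dots> = (\<Sum>l\<in>L. f l)"
    by (rule sum.cong) (use assms in auto)
  finally show ?thesis .
qed

lemma sum_ind1:
  assumes "finite T" "v \<in> T"
  shows "(\<Sum>b\<in>T. if b = v then f else (0::real)) = f"
  using assms by simp




lemma bnd_helper:
  fixes ce ca \<delta> \<beta> B :: real
  assumes "0 \<le> \<delta>" "0 \<le> \<beta>" "0 \<le> ca" "ce \<le> \<delta> \<or> (ce \<le> B \<and> B * ca \<le> \<beta>)"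
  shows "ce * ca \<le> \<delta> * ca + \<beta>"
proof -
  from assms(4) show ?thesis
  proof
    assume "ce \<le> \<delta>"
    then have "ce * ca \<le> \<delta> * ca" using assms(3) by (rule mult_right_mono)
    then show ?thesis using assms(2) by linarith
  next
    assume h: "ce \<le> B \<and> B * ca \<le> \<beta>"
    then have "ce * ca \<le> B * ca" using assms(3) by (simp add: mult_right_mono)
    moreover have "0 \<le> \<delta> * ca" using assms(1,3) by simp
    ultimately show ?thesis using h by linarith
  qed
qed

lemma core:
  fixes E :: "nat \<Rightarrow> nat \<Rightarrow> complex" and c :: "nat \<Rightarrow> complex" and x z :: "nat \<Rightarrow> nat"
    and v w :: nat and D :: "nat \<Rightarrow> real" and \<kappa> \<delta> :: real and r :: nat
  defines "T \<equiv> x ` {1..r} \<union> z ` {2..r} \<union> {v,w}"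
  assumes r1: "1 \<le> r" and kp: "0 < \<kappa>" "\<kappa> \<le> 1" and dp: "0 \<le> \<delta>" "\<delta> * 2^(4*r+4) \<le> \<kappa>"
    and Npos: "0 < (\<Sum>b\<in>T. cmod (c b))"
    and sumc: "cmod (\<Sum>b\<in>T. c b) \<le> \<delta> * (\<Sum>b\<in>T. cmod (c b))"
    and rowE: "\<forall>a\<in>T. cmod (\<Sum>b\<in>T. E a b * c b) \<le> \<delta> * (\<Sum>b\<in>T. cmod (c b))"
    and Dk: "\<forall>k\<in>{2..r}. \<kappa> \<le> D k"
    and vw: "\<kappa> \<le> cmod (E v w)" "\<kappa> \<le> cmod (E w v)"
    and big: "\<forall>k\<in>{2..r}. D k \<le> cmod (E (x k) (z k)) \<and> D k \<le> cmod (E (z k) (x k))"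
    and rowx: "\<forall>k\<in>{2..r}. \<forall>b\<in>T-{z k}. cmod (E (x k) b) \<le> \<delta> \<or> (\<exists>l\<in>{2..<k}. b = z l \<and> cmod (E (x k) b) \<le> D l)"
    and rowv: "\<forall>b\<in>T-{w}. cmod (E v b) \<le> \<delta> \<or> (\<exists>l\<in>{2..r}. b = z l \<and> cmod (E v b) \<le> D l)"
    and roww: "\<forall>b\<in>T-{v}. cmod (E w b) \<le> \<delta> \<or> (\<exists>l\<in>{2..r}. b = z l \<and> cmod (E w b) \<le> D l)"
    and rowz: "\<forall>k\<in>{2..r}. \<forall>b\<in>T-{x k}. cmod (E (z k) b) \<le> \<delta> \<or>
        (((\<exists>j\<in>{Suc k..r}. b = x j) \<or> (\<exists>l\<in>{Suc k..r}. b = z l) \<or> b = v \<or> b = w) \<and> cmod (E (z k) b) \<le> D k) \<or>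
        (\<exists>l\<in>{2..<k}. b = z l \<and> cmod (E (z k) b) \<le> D l)"
  shows False
proof -
  define a where "a = (\<lambda>b. cmod (c b))"
  define N where "N = (\<Sum>b\<in>T. a b)"
  have finT: "finite T" unfolding T_def by simp
  have xT: "\<And>j. j \<in> {1..r} \<Longrightarrow> x j \<in> T" and zT: "\<And>j. j \<in> {2..r} \<Longrightarrow> z j \<in> T"
    and vT: "v \<in> T" and wT: "w \<in> T" unfolding T_def by auto
  have a0: "\<And>b. 0 \<le> a b" unfolding a_def by simp
  have N0: "0 < N" using Npos unfolding N_def a_def .
  have rowE': "\<And>aa. aa \<in> T \<Longrightarrow> cmod (\<Sum>b\<in>T. E aa b * c b) \<le> \<delta> * N"
    using rowE unfolding N_def a_def by blast
  have D0: "\<And>l. l \<in> {2..r} \<Longrightarrow> 0 \<le> D l" using Dk kp by force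
  define U where "U = (\<Sum>l\<in>{2..r}. D l * a (z l))"
  define Zs where "Zs = (\<Sum>l\<in>{2..r}. a (z l))"
  define X where "X = (\<lambda>k. \<Sum>j\<in>{k..r}. a (x j))"
  define P where "P = (\<lambda>k. \<Sum>l\<in>{2..k}. D l * a (z l))"
  have dN: "0 \<le> \<delta> * N" using dp N0 by simp
  have stepA: "D k * a (z k) \<le> 2 * \<delta> * N + P (k - 1)" if k: "k \<in> {2..r}" for k
  proof -
    define \<beta> where "\<beta> = (\<lambda>b. \<Sum>l\<in>{2..<k}. if b = z l then D l * a (z l) else 0)"
    have bnn: "\<forall>b\<in>T. 0 \<le> \<beta> b" unfolding \<beta>_def
      by (intro ballI sum_nonneg) (use D0 a0 k in \<open>auto intro: mult_nonneg_nonneg\<close>)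
    have each: "\<forall>b\<in>T-{z k}. cmod (E (x k) b) * cmod (c b) \<le> \<delta> * cmod (c b) + \<beta> b"
    proof
      fix b assume b: "b \<in> T - {z k}"
      have bnb: "0 \<le> \<beta> b" using bnn b by blast
      from rowx k b consider "cmod (E (x k) b) \<le> \<delta>" | l where "l\<in>{2..<k}" "b = z l" "cmod (E (x k) b) \<le> D l"
        by blast
      then show "cmod (E (x k) b) * cmod (c b) \<le> \<delta> * cmod (c b) + \<beta> b"
      proof cases
        case 1
        have "cmod (E (x k) b) * cmod (c b) \<le> \<delta> * cmod (c b)" by (rule mult_right_mono) (use 1 in auto)
        then show ?thesis using bnb by linarith
      next
        case 2
        have "cmod (E (x k) b) * cmod (c b) \<le> D l * a (z l)"
          using 2 by (simp add: a_def mult_right_mono)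
        also have "\<dots> = (if b = z l then D l * a (z l) else 0)" using 2 by simp
        also have "\<dots> \<le> \<beta> b" unfolding \<beta>_def
          by (rule member_le_sum) (use 2 D0 a0 k in \<open>auto intro: mult_nonneg_nonneg\<close>)
        finally have "cmod (E (x k) b) * cmod (c b) \<le> \<beta> b" by (simp add: a_def)
        moreover have "0 \<le> \<delta> * cmod (c b)" using dp(1) by simp
        ultimately show ?thesis by linarith
      qed
    qed
    have "cmod (E (x k) (z k)) * cmod (c (z k)) \<le> \<delta> * N + \<delta> * (\<Sum>b\<in>T. cmod (c b)) + (\<Sum>b\<in>T. \<beta> b)"
      by (rule row_bound[OF finT zT[OF k] rowE'[OF xT] each bnn dp(1)]) (use k in auto)
    moreover have "(\<Sum>b\<in>T. \<beta> b) = P (k - 1)"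
      unfolding \<beta>_def P_def
      by (subst sum_ind) (use finT zT k in \<open>auto intro!: sum.cong\<close>)
    moreover have "D k * a (z k) \<le> cmod (E (x k) (z k)) * cmod (c (z k))"
      using big k by (simp add: a_def mult_right_mono)
    ultimately show ?thesis unfolding N_def a_def by simp
  qed
  have Pstep: "P k + 2 * \<delta> * N \<le> 2^k * \<delta> * N" if "1 \<le> k" "k \<le> r" for k
    using that
  proof (induction k)
    case 0 then show ?case by simp
  next
    case (Suc k)
    show ?case
    proof (cases "k = 0")
      case True then show ?thesis by (simp add: P_def)
    next
      case False
      then have IH: "P k + 2 * \<delta> * N \<le> 2^k * \<delta> * N" using Suc by simp
      have k2: "Suc k \<in> {2..r}" using False Suc by auto
      have "P (Suc k) = P k + D (Suc k) * a (z (Suc k))" unfolding P_def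
        using False by (simp add: sum.cl_ivl_Suc)
      with stepA[OF k2] IH show ?thesis by simp
    qed
  qed
  have U_le: "U \<le> 2^r * \<delta> * N" using Pstep[OF r1 order.refl] dN unfolding U_def P_def by simp
  have U0: "0 \<le> U" unfolding U_def by (rule sum_nonneg) (use D0 a0 in auto)
  have Zs_le: "\<kappa> * Zs \<le> U" unfolding Zs_def U_def sum_distrib_left
    by (rule sum_mono) (use Dk a0 in \<open>auto intro: mult_right_mono\<close>)
  have stepB: "\<kappa> * a w \<le> 2 * \<delta> * N + U" "\<kappa> * a v \<le> 2 * \<delta> * N + U"
  proof -
    define \<beta> where "\<beta> = (\<lambda>b. \<Sum>l\<in>{2..r}. if b = z l then D l * a (z l) else 0)"
    have bnn: "\<forall>b\<in>T. 0 \<le> \<beta> b" unfolding \<beta>_def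
      by (intro ballI sum_nonneg) (use D0 a0 in \<open>auto intro: mult_nonneg_nonneg\<close>)
    have sb: "(\<Sum>b\<in>T. \<beta> b) = U" unfolding \<beta>_def U_def
      by (subst sum_ind) (use finT zT in auto)
    have mem: "D l * a (z l) \<le> \<beta> (z l)" if "l \<in> {2..r}" for l
    proof -
      have "D l * a (z l) = (if z l = z l then D l * a (z l) else 0)" by simp
      also have "\<dots> \<le> \<beta> (z l)" unfolding \<beta>_def
        by (rule member_le_sum) (use that D0 a0 in \<open>auto intro: mult_nonneg_nonneg\<close>)
      finally show ?thesis .
    qed
    have eachv: "\<forall>b\<in>T-{w}. cmod (E v b) * cmod (c b) \<le> \<delta> * cmod (c b) + \<beta> b"
    proof
      fix b assume b: "b \<in> T - {w}"
      from rowv b have "cmod (E v b) \<le> \<delta> \<or> (\<exists>l\<in>{2..r}. b = z l \<and> cmod (E v b) \<le> D l)" by blast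
      then have "cmod (E v b) \<le> \<delta> \<or> (\<exists>B. cmod (E v b) \<le> B \<and> B * cmod (c b) \<le> \<beta> b)"
        using mem unfolding a_def by blast
      then show "cmod (E v b) * cmod (c b) \<le> \<delta> * cmod (c b) + \<beta> b"
        using bnd_helper[OF dp(1), of "\<beta> b" "cmod (c b)" "cmod (E _ b)"] bnn b by auto
    qed
    have eachw: "\<forall>b\<in>T-{v}. cmod (E w b) * cmod (c b) \<le> \<delta> * cmod (c b) + \<beta> b"
    proof
      fix b assume b: "b \<in> T - {v}"
      from roww b have "cmod (E w b) \<le> \<delta> \<or> (\<exists>l\<in>{2..r}. b = z l \<and> cmod (E w b) \<le> D l)" by blast
      then have "cmod (E w b) \<le> \<delta> \<or> (\<exists>B. cmod (E w b) \<le> B \<and> B * cmod (c b) \<le> \<beta> b)"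
        using mem unfolding a_def by blast
      then show "cmod (E w b) * cmod (c b) \<le> \<delta> * cmod (c b) + \<beta> b"
        using bnd_helper[OF dp(1), of "\<beta> b" "cmod (c b)" "cmod (E _ b)"] bnn b by auto
    qed
    have "cmod (E v w) * cmod (c w) \<le> \<delta> * N + \<delta> * (\<Sum>b\<in>T. cmod (c b)) + (\<Sum>b\<in>T. \<beta> b)"
      by (rule row_bound[OF finT wT rowE'[OF vT] eachv bnn dp(1)])
    moreover have "\<kappa> * a w \<le> cmod (E v w) * cmod (c w)"
      using vw a0 by (simp add: a_def mult_right_mono)
    ultimately show "\<kappa> * a w \<le> 2 * \<delta> * N + U" using sb unfolding N_def a_def by simp
    have "cmod (E w v) * cmod (c v) \<le> \<delta> * N + \<delta> * (\<Sum>b\<in>T. cmod (c b)) + (\<Sum>b\<in>T. \<beta> b)"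
      by (rule row_bound[OF finT vT rowE'[OF wT] eachw bnn dp(1)])
    moreover have "\<kappa> * a v \<le> cmod (E w v) * cmod (c v)"
      using vw a0 by (simp add: a_def mult_right_mono)
    ultimately show "\<kappa> * a v \<le> 2 * \<delta> * N + U" using sb unfolding N_def a_def by simp
  qed
  define R where "R = 2 * \<delta> * N + U"
  have R0: "0 \<le> R" unfolding R_def using dN U0 by simp
  have stepC: "\<kappa> * a (x k) \<le> R + \<kappa> * (X (Suc k) + Zs + a v + a w)" if k: "k \<in> {2..r}" for k
  proof -
    define \<beta>1 where "\<beta>1 = (\<lambda>b. \<Sum>j\<in>{Suc k..r}. if b = x j then a (x j) else 0)"
    define \<beta>2 where "\<beta>2 = (\<lambda>b. \<Sum>l\<in>{Suc k..r}. if b = z l then a (z l) else 0)"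
    define \<beta>3 where "\<beta>3 = (\<lambda>b. if b = v then a v else (0::real))"
    define \<beta>4 where "\<beta>4 = (\<lambda>b. if b = w then a w else (0::real))"
    define \<beta>5 where "\<beta>5 = (\<lambda>b. \<Sum>l\<in>{2..<k}. if b = z l then D l * a (z l) else 0)"
    define \<beta> where "\<beta> = (\<lambda>b. D k * (\<beta>1 b + \<beta>2 b + \<beta>3 b + \<beta>4 b) + \<beta>5 b)"
    have Dk0: "0 \<le> D k" using D0 k by blast
    have b1: "0 \<le> \<beta>1 b" for b unfolding \<beta>1_def by (rule sum_nonneg) (use a0 in auto)
    have b2: "0 \<le> \<beta>2 b" for b unfolding \<beta>2_def by (rule sum_nonneg) (use a0 in auto)
    have b3: "0 \<le> \<beta>3 b" for b unfolding \<beta>3_def using a0 by auto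
    have b4: "0 \<le> \<beta>4 b" for b unfolding \<beta>4_def using a0 by auto
    have b5: "0 \<le> \<beta>5 b" for b unfolding \<beta>5_def
      by (rule sum_nonneg) (use a0 D0 k in \<open>auto intro: mult_nonneg_nonneg\<close>)
    have bnn: "\<forall>b\<in>T. 0 \<le> \<beta> b" unfolding \<beta>_def using b1 b2 b3 b4 b5 Dk0 by simp
    have s1: "(\<Sum>b\<in>T. \<beta>1 b) = X (Suc k)" unfolding \<beta>1_def X_def
      by (subst sum_ind) (use finT xT k in auto)
    have s2: "(\<Sum>b\<in>T. \<beta>2 b) = (\<Sum>l\<in>{Suc k..r}. a (z l))" unfolding \<beta>2_def
      by (subst sum_ind) (use finT zT k in auto)
    have s3: "(\<Sum>b\<in>T. \<beta>3 b) = a v" unfolding \<beta>3_def using finT vT by simp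
    have s4: "(\<Sum>b\<in>T. \<beta>4 b) = a w" unfolding \<beta>4_def using finT wT by simp
    have s5: "(\<Sum>b\<in>T. \<beta>5 b) = P (k - 1)" unfolding \<beta>5_def P_def
      by (subst sum_ind) (use finT zT k in \<open>auto intro!: sum.cong\<close>)
    have sb: "(\<Sum>b\<in>T. \<beta> b) = D k * (X (Suc k) + (\<Sum>l\<in>{Suc k..r}. a (z l)) + a v + a w) + P (k - 1)"
      unfolding \<beta>_def sum.distrib s5[symmetric] s1[symmetric] s2[symmetric] s3[symmetric] s4[symmetric]
        by (simp add: sum_distrib_left[symmetric] sum.distrib)
    have each: "\<forall>b\<in>T-{x k}. cmod (E (z k) b) * cmod (c b) \<le> \<delta> * cmod (c b) + \<beta> b"
    proof
      fix b assume b: "b \<in> T - {x k}"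
      have "cmod (E (z k) b) \<le> \<delta> \<or> (\<exists>B. cmod (E (z k) b) \<le> B \<and> B * cmod (c b) \<le> \<beta> b)"
      proof -
        from rowz k b consider "cmod (E (z k) b) \<le> \<delta>"
          | "((\<exists>j\<in>{Suc k..r}. b = x j) \<or> (\<exists>l\<in>{Suc k..r}. b = z l) \<or> b = v \<or> b = w)" "cmod (E (z k) b) \<le> D k"
          | l where "l\<in>{2..<k}" "b = z l" "cmod (E (z k) b) \<le> D l" by blast
        then show ?thesis
        proof cases
          case 1 then show ?thesis by blast
        next
          case 2
          have "a b \<le> \<beta>1 b + \<beta>2 b + \<beta>3 b + \<beta>4 b"
          proof -
            from 2(1) consider j where "j\<in>{Suc k..r}" "b = x j" | l where "l\<in>{Suc k..r}" "b = z l" | "b = v" | "b = w"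
              by blast
            then show ?thesis
            proof cases
              case 1
              have "a b = (if b = x j then a (x j) else 0)" using 1 by simp
              also have "\<dots> \<le> \<beta>1 b" unfolding \<beta>1_def
                by (rule member_le_sum) (use 1 a0 in auto)
              finally show ?thesis using b2[of b] b3[of b] b4[of b] by linarith
            next
              case 2
              have "a b = (if b = z l then a (z l) else 0)" using 2 by simp
              also have "\<dots> \<le> \<beta>2 b" unfolding \<beta>2_def
                by (rule member_le_sum) (use 2 a0 in auto)
              finally show ?thesis using b1[of b] b3[of b] b4[of b] by linarith
            next
              case 3 then show ?thesis using b1[of b] b2[of b] b4[of b] unfolding \<beta>3_def by simp
            next
              case 4 then show ?thesis using b1[of b] b2[of b] b3[of b] unfolding \<beta>4_def by simp
            qed
          qed
          then have "D k * a b \<le> D k * (\<beta>1 b + \<beta>2 b + \<beta>3 b + \<beta>4 b)"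
            using Dk0 by (simp add: mult_left_mono)
          then have "D k * cmod (c b) \<le> \<beta> b" unfolding \<beta>_def a_def using b5[of b] by linarith
          then show ?thesis using 2(2) by blast
        next
          case 3
          have "D l * a (z l) = (if b = z l then D l * a (z l) else 0)" using 3 by simp
          also have "\<dots> \<le> \<beta>5 b" unfolding \<beta>5_def
            by (rule member_le_sum) (use 3 D0 a0 k in \<open>auto intro: mult_nonneg_nonneg\<close>)
          finally have "D l * cmod (c b) \<le> \<beta> b" unfolding \<beta>_def a_def
            using 3(2) b1[of b] b2[of b] b3[of b] b4[of b] Dk0
            by (smt (verit) mult_nonneg_nonneg)
          then show ?thesis using 3(3) by blast
        qed
      qed
      then show "cmod (E (z k) b) * cmod (c b) \<le> \<delta> * cmod (c b) + \<beta> b"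
        using bnd_helper[OF dp(1), of "\<beta> b" "cmod (c b)" "cmod (E (z k) b)"] bnn b by auto
    qed
    have "cmod (E (z k) (x k)) * cmod (c (x k)) \<le> \<delta> * N + \<delta> * (\<Sum>b\<in>T. cmod (c b)) + (\<Sum>b\<in>T. \<beta> b)"
      by (rule row_bound[OF finT xT rowE'[OF zT[OF k]] each bnn dp(1)]) (use k in auto)
    moreover have "D k * a (x k) \<le> cmod (E (z k) (x k)) * cmod (c (x k))"
      using big k a0 by (simp add: a_def mult_right_mono)
    moreover have "(\<Sum>l\<in>{Suc k..r}. a (z l)) \<le> Zs" unfolding Zs_def
      by (rule sum_mono2) (use k a0 in auto)
    then have "D k * (\<Sum>l\<in>{Suc k..r}. a (z l)) \<le> D k * Zs" using Dk0 by (simp add: mult_left_mono)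
    moreover have "P (k - 1) \<le> U" unfolding P_def U_def
      by (rule sum_mono2) (use k a0 D0 in \<open>auto intro: mult_nonneg_nonneg\<close>)
    ultimately have "D k * a (x k) \<le> R + D k * (X (Suc k) + Zs + a v + a w)"
      unfolding R_def N_def sb by (simp add: ring_distribs a_def)
    then have h: "D k * (a (x k) - (X (Suc k) + Zs + a v + a w)) \<le> R" by (simp add: algebra_simps)
    have "\<kappa> * (a (x k) - (X (Suc k) + Zs + a v + a w)) \<le> R"
    proof (cases "a (x k) - (X (Suc k) + Zs + a v + a w) \<le> 0")
      case True then show ?thesis using kp R0 by (smt (verit) mult_nonneg_nonpos)
    next
      case False
      then have "\<kappa> * (a (x k) - (X (Suc k) + Zs + a v + a w)) \<le> D k * (a (x k) - (X (Suc k) + Zs + a v + a w))"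
        using Dk k by (intro mult_right_mono) auto
      then show ?thesis using h by linarith
    qed
    then show ?thesis by (simp add: algebra_simps)
  qed
  define Q where "Q = R + \<kappa> * (Zs + a v + a w)"
  have X0: "\<And>k. 0 \<le> X k" unfolding X_def by (rule sum_nonneg) (use a0 in auto)
  have Xind: "\<kappa> * X (r + 1 - d) + Q \<le> 2^d * Q" if "d \<le> r - 1" for d
    using that
  proof (induction d)
    case 0 then show ?case by (simp add: X_def)
  next
    case (Suc d)
    define k where "k = r - d"
    have k: "k \<in> {2..r}" using Suc.prems unfolding k_def by auto
    have kk: "r + 1 - Suc d = k" "r + 1 - d = Suc k" using Suc.prems unfolding k_def by auto
    have "X k = a (x k) + X (Suc k)" unfolding X_def using k by (simp add: sum.atLeast_Suc_atMost)
    then have "\<kappa> * X k = \<kappa> * a (x k) + \<kappa> * X (Suc k)" by (simp add: algebra_simps)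
    moreover have "\<kappa> * a (x k) \<le> \<kappa> * X (Suc k) + Q"
      using stepC[OF k] unfolding Q_def by (simp add: algebra_simps)
    moreover have "\<kappa> * X (Suc k) + Q \<le> 2^d * Q" using Suc kk by simp
    ultimately show ?case unfolding kk by simp
  qed
  have X2: "\<kappa> * X 2 + Q \<le> 2^(r-1) * Q" using Xind[of "r - 1"] r1 by simp
  have Q_le: "Q \<le> 6 * \<delta> * N + 4 * U"
    unfolding Q_def R_def using Zs_le stepB by (simp add: algebra_simps)
  define rest where "rest = (\<Sum>b\<in>T-{x 1}. a b)"
  have x1T: "x 1 \<in> T" using xT r1 by auto
  have Nsplit: "N = a (x 1) + rest" unfolding N_def rest_def using finT x1T by (simp add: sum.remove)
  have ax1: "a (x 1) \<le> \<delta> * N + rest"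
  proof -
    have "(\<Sum>b\<in>T. c b) = c (x 1) + (\<Sum>b\<in>T-{x 1}. c b)" using finT x1T by (simp add: sum.remove)
    then have "cmod (c (x 1)) \<le> cmod (\<Sum>b\<in>T. c b) + cmod (\<Sum>b\<in>T-{x 1}. c b)"
      by (metis add_diff_cancel_right' norm_triangle_ineq4 add.commute)
    also have "cmod (\<Sum>b\<in>T-{x 1}. c b) \<le> rest" unfolding rest_def a_def by (rule norm_sum)
    finally show ?thesis using sumc unfolding a_def N_def by simp
  qed
  have rest_le: "rest \<le> X 2 + Zs + a v + a w"
  proof -
    define \<gamma> where "\<gamma> = (\<lambda>b. (\<Sum>j\<in>{2..r}. if b = x j then a (x j) else 0) + (\<Sum>l\<in>{2..r}. if b = z l then a (z l) else 0)
       + (if b = v then a v else 0) + (if b = w then a w else 0))"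
    have g0: "0 \<le> \<gamma> b" for b unfolding \<gamma>_def
      by (intro add_nonneg_nonneg sum_nonneg) (use a0 in auto)
    have "rest \<le> (\<Sum>b\<in>T-{x 1}. \<gamma> b)" unfolding rest_def
    proof (rule sum_mono)
      fix b assume b: "b \<in> T - {x 1}"
      let ?g1 = "(\<Sum>j\<in>{2..r}. if b = x j then a (x j) else 0)"
      let ?g2 = "(\<Sum>l\<in>{2..r}. if b = z l then a (z l) else 0)"
      have n1: "0 \<le> ?g1" "0 \<le> ?g2" by (rule sum_nonneg, use a0 in auto)+
      have n3: "0 \<le> (if b = v then a v else 0)" "0 \<le> (if b = w then a w else 0)" using a0 by auto
      from b consider j where "j \<in> {2..r}" "b = x j" | l where "l \<in> {2..r}" "b = z l" | "b = v" | "b = w"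
      proof -
        have "b \<in> x ` {1..r} \<or> b \<in> z ` {2..r} \<or> b = v \<or> b = w" using b unfolding T_def by blast
        moreover have "b \<in> x ` {1..r} \<Longrightarrow> \<exists>j\<in>{2..r}. b = x j"
        proof -
          assume "b \<in> x ` {1..r}"
          then obtain j where j: "j \<in> {1..r}" "b = x j" by blast
          then have "j \<noteq> 1" using b by auto
          then show ?thesis using j by (intro bexI[of _ j]) auto
        qed
        ultimately show ?thesis using that by blast
      qed
      then show "a b \<le> \<gamma> b"
      proof cases
        case 1
        have "a b = (if b = x j then a (x j) else 0)" using 1 by simp
        also have "\<dots> \<le> ?g1" by (rule member_le_sum) (use 1 a0 in auto)
        finally show ?thesis unfolding \<gamma>_def using n1 n3 by linarith
      next
        case 2
        have "a b = (if b = z l then a (z l) else 0)" using 2 by simp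
        also have "\<dots> \<le> ?g2" by (rule member_le_sum) (use 2 a0 in auto)
        finally show ?thesis unfolding \<gamma>_def using n1 n3 by linarith
      next
        case 3 then have "a b = (if b = v then a v else 0)" by simp
        then show ?thesis unfolding \<gamma>_def using n1 n3 by linarith
      next
        case 4 then have "a b = (if b = w then a w else 0)" by simp
        then show ?thesis unfolding \<gamma>_def using n1 n3 by linarith
      qed
    qed
    also have "\<dots> \<le> (\<Sum>b\<in>T. \<gamma> b)" by (rule sum_mono2) (use finT g0 in auto)
    also have "\<dots> = X 2 + Zs + a v + a w"
    proof -
      have "(\<Sum>b\<in>T. \<gamma> b) = (\<Sum>b\<in>T. \<Sum>j\<in>{2..r}. if b = x j then a (x j) else 0)
        + (\<Sum>b\<in>T. \<Sum>l\<in>{2..r}. if b = z l then a (z l) else 0)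
        + (\<Sum>b\<in>T. if b = v then a v else 0) + (\<Sum>b\<in>T. if b = w then a w else 0)"
        unfolding \<gamma>_def by (simp add: sum.distrib)
      also have "\<dots> = X 2 + Zs + a v + a w"
        unfolding X_def Zs_def
        by (subst sum_ind, use finT xT in auto)+ (use finT vT wT zT in auto)
      finally show ?thesis .
    qed
    finally show ?thesis .
  qed
  have kr: "\<kappa> * rest \<le> 2^(r-1) * Q"
  proof -
    have "\<kappa> * rest \<le> \<kappa> * (X 2 + Zs + a v + a w)" using rest_le kp by (simp add: mult_left_mono)
    also have "\<dots> \<le> \<kappa> * X 2 + Q" unfolding Q_def using R0 by (simp add: algebra_simps)
    finally show ?thesis using X2 by linarith
  qed
    define t :: real where "t = 2^r"
  have t2: "2 \<le> t" unfolding t_def using power_increasing[of 1 r "2::real"] r1 by simp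
  have pow: "(2::real)^(4*r+4) = 16 * (t^2 * t^2)" unfolding t_def
  proof -
    have "(2::real)^(4*r+4) = 2^(4*r) * 16" by (simp add: power_add)
    also have "(2::real)^(4*r) = (2^r)^2 * (2^r)^2"
    proof -
      have "(2::real)^(4*r) = (2^r)^4" by (metis mult.commute power_mult)
      then show ?thesis by (simp add: power4_eq_xxxx power2_eq_square)
    qed
    finally show "(2::real)^(4*r+4) = 16 * ((2^r)^2 * (2^r)^2)" by simp
  qed
  have pow2: "(2::real)^r = 2 * 2^(r-1)" using r1 by (cases r) auto
  define sq where "sq = t^2"
  have sq4: "4 \<le> sq" unfolding sq_def power2_eq_square using mult_mono[OF t2 t2] t2 by simp
  have "N \<le> \<delta> * N + 2 * rest" using Nsplit ax1 by linarith
  then have s1: "\<kappa> * N \<le> \<kappa> * (\<delta> * N) + 2 * (\<kappa> * rest)"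
  proof -
    have "\<kappa> * N \<le> \<kappa> * (\<delta> * N + 2 * rest)" using kp \<open>N \<le> _\<close> by (intro mult_left_mono) auto
    then show ?thesis by (simp add: algebra_simps)
  qed
  have s2: "2 * (\<kappa> * rest) \<le> t * Q" using kr pow2 unfolding t_def by simp
  have s3: "Q \<le> 6 * \<delta> * N + 4 * (t * \<delta> * N)" using Q_le U_le unfolding t_def by simp
  have s4: "6 * \<delta> * N \<le> 4 * (t * \<delta> * N)"
  proof -
    have "6 * (\<delta> * N) \<le> (4 * t) * (\<delta> * N)" using t2 dN by (intro mult_right_mono) auto
    then show ?thesis by (simp add: algebra_simps)
  qed
  have "Q \<le> 8 * (t * \<delta> * N)" using s3 s4 by linarith
  then have "t * Q \<le> t * (8 * (t * \<delta> * N))" using t2 by (intro mult_left_mono) auto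
  then have s5: "t * Q \<le> 8 * sq * (\<delta> * N)" unfolding sq_def by (simp add: power2_eq_square algebra_simps)
  have d1: "256 * \<delta> \<le> \<kappa>"
  proof -
    have "16 \<le> sq * sq" using sq4 mult_mono[of 4 sq 4 sq] by simp
    then have "256 * \<delta> \<le> 16 * (sq * sq) * \<delta>" using dp(1) by (intro mult_right_mono) auto
    then show ?thesis using dp(2) pow unfolding sq_def by (simp add: algebra_simps)
  qed
  have d2: "64 * sq * \<delta> \<le> \<kappa>"
  proof -
    have "64 * sq \<le> 16 * (sq * sq)" using sq4 mult_right_mono[of 4 sq sq] by simp
    then have "64 * sq * \<delta> \<le> 16 * (sq * sq) * \<delta>" using dp(1) by (intro mult_right_mono) auto
    then show ?thesis using dp(2) pow unfolding sq_def by (simp add: algebra_simps)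
  qed
  have e1: "8 * sq * (\<delta> * N) \<le> \<kappa> * N / 8"
  proof -
    have "(64 * sq * \<delta>) * N \<le> \<kappa> * N" using d2 N0 by (intro mult_right_mono) auto
    then show ?thesis by (simp add: algebra_simps)
  qed
  have e2: "\<kappa> * (\<delta> * N) \<le> \<kappa> * N / 256"
  proof -
    have "(256 * \<delta>) * N \<le> 1 * N" using d1 kp N0 by (intro mult_right_mono) auto
    then have "\<delta> * N \<le> N / 256" by simp
    then show ?thesis using kp by (simp add: mult_left_mono)
  qed
  have "0 < \<kappa> * N" using kp N0 by simp
  then show False using s1 s2 s5 e1 e2 by linarith
qed



lemma K_mem: "\<sigma> \<in> clique_complex G \<kappa> \<longleftrightarrow> \<sigma> \<noteq> {} \<and> \<sigma> \<subseteq> {0..<dim_row G} \<and> (\<forall>u\<in>\<sigma>. \<forall>v\<in>\<sigma>. u \<noteq> v \<longrightarrow> adj G \<kappa> u v)"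
  by (simp add: clique_complex_def)

lemma K_finite: "\<sigma> \<in> clique_complex G \<kappa> \<Longrightarrow> finite \<sigma>"
  unfolding K_mem using finite_subset by blast

lemma K_sub: "\<sigma> \<in> clique_complex G \<kappa> \<Longrightarrow> \<tau> \<subseteq> \<sigma> \<Longrightarrow> \<tau> \<noteq> {} \<Longrightarrow> \<tau> \<in> clique_complex G \<kappa>"
  unfolding K_mem by blast

lemma K_adj: "\<sigma> \<in> clique_complex G \<kappa> \<Longrightarrow> u \<in> \<sigma> \<Longrightarrow> v \<in> \<sigma> \<Longrightarrow> u \<noteq> v \<Longrightarrow> cmod (G $$ (u,v) - 1) < \<kappa>"
  unfolding K_mem adj_def by blast

lemma K_range: "\<sigma> \<in> clique_complex G \<kappa> \<Longrightarrow> u \<in> \<sigma> \<Longrightarrow> u < dim_row G"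
  unfolding K_mem by auto

lemma facets_in_K:
  assumes "\<sigma> \<in> clique_complex G \<kappa>" "2 \<le> card \<sigma>" "\<rho> \<in> facets \<sigma>"
  shows "\<rho> \<in> clique_complex G \<kappa> \<and> card \<rho> = card \<sigma> - 1 \<and> \<rho> \<subseteq> \<sigma>"
proof -
  obtain v where v: "v \<in> \<sigma>" "\<rho> = \<sigma> - {v}" using assms(3) unfolding facets_def by blast
  have fin: "finite \<sigma>" using K_finite assms(1) by blast
  have c: "card \<rho> = card \<sigma> - 1" using v fin by simp
  then have "\<rho> \<noteq> {}" using assms(2) by auto
  then show ?thesis using K_sub[OF assms(1)] v c by auto
qed

lemma strict_irrefl: "strict_total_on A r \<Longrightarrow> \<not> r a a"
  unfolding strict_total_on_def by simp

lemma strict_trans: "strict_total_on A r \<Longrightarrow> r a b \<Longrightarrow> r b c \<Longrightarrow> r a c"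
  unfolding strict_total_on_def by metis

lemma strict_tot: "strict_total_on A r \<Longrightarrow> a \<in> A \<Longrightarrow> b \<in> A \<Longrightarrow> a \<noteq> b \<Longrightarrow> r a b \<or> r b a"
  unfolding strict_total_on_def by simp

lemma strict_asym: "strict_total_on A r \<Longrightarrow> r a b \<Longrightarrow> \<not> r b a"
  using strict_irrefl strict_trans by metis

lemma max_exists:
  assumes st: "strict_total_on A r" and fin: "finite F"
  shows "F \<noteq> {} \<Longrightarrow> F \<subseteq> A \<Longrightarrow> \<exists>m\<in>F. \<forall>y\<in>F. y \<noteq> m \<longrightarrow> r m y"
  using fin
proof (induction F rule: finite_induct)
  case empty then show ?case by simp
next
  case (insert x F)
  show ?case
  proof (cases "F = {}")
    case True then show ?thesis by simp
  next
    case False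
    have FA: "F \<subseteq> A" and xA: "x \<in> A" using insert.prems(2) by auto
    obtain m where m: "m \<in> F" "\<forall>y\<in>F. y \<noteq> m \<longrightarrow> r m y" using insert.IH[OF False FA] by blast
    have xm: "x \<noteq> m" using insert.hyps(2) m(1) by blast
    have mA: "m \<in> A" using FA m(1) by blast
    have "r x m \<or> r m x" using strict_tot[OF st xA mA xm] .
    then show ?thesis
    proof
      assume xm': "r x m"
      have "\<forall>y\<in>insert x F. y \<noteq> x \<longrightarrow> r x y"
      proof (intro ballI impI)
        fix y assume "y \<in> insert x F" "y \<noteq> x"
        then have y: "y \<in> F" by simp
        show "r x y"
        proof (cases "y = m")
          case True then show ?thesis using xm' by simp
        next
          case False
          then have "r m y" using m(2) y by blast
          then show ?thesis using strict_trans[OF st xm'] by blast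
        qed
      qed
      then show ?thesis by (intro bexI[of _ x]) auto
    next
      assume mx: "r m x"
      have "\<forall>y\<in>insert x F. y \<noteq> m \<longrightarrow> r m y"
      proof (intro ballI impI)
        fix y assume "y \<in> insert x F" "y \<noteq> m"
        then show "r m y" using m(2) mx by auto
      qed
      then show ?thesis using m(1) by (intro bexI[of _ m]) auto
    qed
  qed
qed

lemma mu_prop:
  assumes st: "strict_total_on (clique_complex G \<kappa>) succ"
    and s: "\<sigma> \<in> clique_complex G \<kappa>" and c: "2 \<le> card \<sigma>"
  shows "mu succ \<sigma> \<in> facets \<sigma> \<and> (\<forall>\<rho>'\<in>facets \<sigma>. \<rho>' \<noteq> mu succ \<sigma> \<longrightarrow> succ (mu succ \<sigma>) \<rho>')"
proof -
  have fin: "finite (facets \<sigma>)" using K_finite[OF s] unfolding facets_def by simp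
  have "\<sigma> \<noteq> {}" using c by auto
  then obtain v where "v \<in> \<sigma>" by blast
  then have "\<sigma> - {v} \<in> facets \<sigma>" unfolding facets_def by blast
  then have ne: "facets \<sigma> \<noteq> {}" by blast
  have sub: "facets \<sigma> \<subseteq> clique_complex G \<kappa>" using facets_in_K[OF s c] by blast
  from max_exists[OF st fin ne sub] obtain m where m: "m \<in> facets \<sigma>" "\<forall>y\<in>facets \<sigma>. y \<noteq> m \<longrightarrow> succ m y"
    by (elim bexE) simp
  have "mu succ \<sigma> = m" unfolding mu_def
  proof (rule the_equality)
    show "m \<in> facets \<sigma> \<and> (\<forall>\<rho>'\<in>facets \<sigma>. \<rho>' \<noteq> m \<longrightarrow> succ m \<rho>')" using m by blast
  next
    fix \<rho> assume h: "\<rho> \<in> facets \<sigma> \<and> (\<forall>\<rho>'\<in>facets \<sigma>. \<rho>' \<noteq> \<rho> \<longrightarrow> succ \<rho> \<rho>')"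
    show "\<rho> = m"
    proof (rule ccontr)
      assume "\<rho> \<noteq> m"
      then have "succ \<rho> m" "succ m \<rho>" using h m by auto
      then show False using strict_asym[OF st, of \<rho> m] by simp
    qed
  qed
  then show ?thesis using m by simp
qed

lemma Vset_iff: "u \<in> Vset G \<kappa> succ \<rho> \<longleftrightarrow> u \<notin> \<rho> \<and> insert u \<rho> \<in> clique_complex G \<kappa> \<and> mu succ (insert u \<rho>) = \<rho>"
  by (simp add: Vset_def)

lemma co_parts:
  assumes "constructed_order G \<kappa> succ"
  shows "strict_total_on (clique_complex G \<kappa>) succ"
    "\<And>\<sigma> \<tau>. \<sigma> \<in> clique_complex G \<kappa> \<Longrightarrow> \<tau> \<in> clique_complex G \<kappa> \<Longrightarrow> card \<sigma> = card \<tau> \<Longrightarrow> 2 \<le> card \<sigma> \<Longrightarrow>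
         succ (mu succ \<sigma>) (mu succ \<tau>) \<Longrightarrow> succ \<sigma> \<tau>"
    "\<And>\<rho>. \<rho> \<in> clique_complex G \<kappa> \<Longrightarrow> \<exists>vs. greedy_seq G (Vset G \<kappa> succ \<rho>) vs \<and>
         (\<forall>i j. i < j \<longrightarrow> j < length vs \<longrightarrow> succ (insert (vs ! i) \<rho>) (insert (vs ! j) \<rho>))"
proof -
  have h: "strict_total_on (clique_complex G \<kappa>) succ \<and>
     (\<forall>\<sigma>\<in>clique_complex G \<kappa>. \<forall>\<tau>\<in>clique_complex G \<kappa>. card \<sigma> > card \<tau> \<longrightarrow> succ \<sigma> \<tau>) \<and>
     (\<forall>\<sigma>\<in>clique_complex G \<kappa>. \<forall>\<tau>\<in>clique_complex G \<kappa>. card \<sigma> = card \<tau> \<longrightarrow> card \<sigma> \<ge> 2 \<longrightarrow>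
         succ (mu succ \<sigma>) (mu succ \<tau>) \<longrightarrow> succ \<sigma> \<tau>) \<and>
     (\<forall>\<rho>\<in>clique_complex G \<kappa>. \<exists>vs. greedy_seq G (Vset G \<kappa> succ \<rho>) vs \<and>
         (\<forall>i j. i < j \<longrightarrow> j < length vs \<longrightarrow> succ (insert (vs ! i) \<rho>) (insert (vs ! j) \<rho>)))"
    using assms unfolding constructed_order_def Let_def by assumption
  show "strict_total_on (clique_complex G \<kappa>) succ" using h by (rule conjunct1)
  show "\<And>\<sigma> \<tau>. \<sigma> \<in> clique_complex G \<kappa> \<Longrightarrow> \<tau> \<in> clique_complex G \<kappa> \<Longrightarrow> card \<sigma> = card \<tau> \<Longrightarrow> 2 \<le> card \<sigma> \<Longrightarrow>
         succ (mu succ \<sigma>) (mu succ \<tau>) \<Longrightarrow> succ \<sigma> \<tau>"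
    using h[THEN conjunct2, THEN conjunct2, THEN conjunct1] by blast
  show "\<And>\<rho>. \<rho> \<in> clique_complex G \<kappa> \<Longrightarrow> \<exists>vs. greedy_seq G (Vset G \<kappa> succ \<rho>) vs \<and>
         (\<forall>i j. i < j \<longrightarrow> j < length vs \<longrightarrow> succ (insert (vs ! i) \<rho>) (insert (vs ! j) \<rho>))"
    using h[THEN conjunct2, THEN conjunct2, THEN conjunct2] by blast
qed

lemma facetI: "v \<in> \<sigma> \<Longrightarrow> \<rho> = \<sigma> - {v} \<Longrightarrow> \<rho> \<in> facets \<sigma>"
  unfolding facets_def by blast

lemma facetE: "\<rho> \<in> facets \<sigma> \<Longrightarrow> (\<And>v. v \<in> \<sigma> \<Longrightarrow> \<rho> = \<sigma> - {v} \<Longrightarrow> P) \<Longrightarrow> P"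
  unfolding facets_def by blast

lemma desc:
  assumes co: "constructed_order G \<kappa> succ"
    and b: "\<beta> \<in> clique_complex G \<kappa>" and c: "2 \<le> card \<beta>" and u: "u \<in> Vset G \<kappa> succ \<beta>"
  shows "u \<in> Vset G \<kappa> succ (mu succ \<beta>) \<and> succ \<beta> (insert u (mu succ \<beta>))"
proof -
  define K where "K = clique_complex G \<kappa>"
  define \<alpha> where "\<alpha> = mu succ \<beta>"
  have st: "strict_total_on K succ" unfolding K_def by (rule co_parts(1)[OF co])
  have uV: "u \<notin> \<beta>" "insert u \<beta> \<in> K" "mu succ (insert u \<beta>) = \<beta>" using u unfolding Vset_iff K_def by auto
  have finb: "finite \<beta>" using K_finite[OF b] .
  have mp: "\<alpha> \<in> facets \<beta>" using mu_prop[OF st[unfolded K_def] b c] unfolding \<alpha>_def by (rule conjunct1)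
  obtain x where x: "x \<in> \<beta>" "\<alpha> = \<beta> - {x}" using mp by (rule facetE)
  have xu: "x \<noteq> u" using x(1) uV(1) by auto
  have cu: "2 \<le> card (insert u \<beta>)" using c uV(1) finb by simp
  have f1: "insert u \<alpha> \<in> facets (insert u \<beta>)"
    by (rule facetI[of x]) (use x xu in auto)
  have ne: "insert u \<alpha> \<noteq> \<beta>" using uV(1) by auto
  have mp2: "\<forall>\<rho>'\<in>facets (insert u \<beta>). \<rho>' \<noteq> mu succ (insert u \<beta>) \<longrightarrow> succ (mu succ (insert u \<beta>)) \<rho>'"
    using mu_prop[OF st[unfolded K_def] uV(2)[unfolded K_def] cu] by (rule conjunct2)
  have s1: "succ \<beta> (insert u \<alpha>)" using mp2[rule_format, OF f1] ne unfolding uV(3) by simp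
  have sub: "insert u \<alpha> \<subseteq> insert u \<beta>" using x(2) by auto
  have inK: "insert u \<alpha> \<in> K" unfolding K_def
    by (rule K_sub[OF uV(2)[unfolded K_def] sub]) simp
  have ua: "u \<notin> \<alpha>" using uV(1) x(2) by auto
  have cardeq: "card (insert u \<alpha>) = card \<beta>"
  proof -
    have fa: "finite \<alpha>" using finb x(2) by simp
    have "card (insert u \<alpha>) = Suc (card \<alpha>)" using ua fa by simp
    also have "card \<alpha> = card \<beta> - 1" using x finb by simp
    finally show ?thesis using c by simp
  qed
  have af: "\<alpha> \<in> facets (insert u \<alpha>)"
    by (rule facetI[of u]) (use ua in auto)
  have c2: "2 \<le> card (insert u \<alpha>)" using cardeq c by simp
  have "mu succ (insert u \<alpha>) = \<alpha>"
  proof (rule ccontr)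
    assume h: "mu succ (insert u \<alpha>) \<noteq> \<alpha>"
    have mp3: "\<forall>\<rho>'\<in>facets (insert u \<alpha>). \<rho>' \<noteq> mu succ (insert u \<alpha>) \<longrightarrow> succ (mu succ (insert u \<alpha>)) \<rho>'"
      using mu_prop[OF st[unfolded K_def] inK[unfolded K_def] c2] by (rule conjunct2)
    have "succ (mu succ (insert u \<alpha>)) \<alpha>" using mp3[rule_format, OF af] h by metis
    then have "succ (mu succ (insert u \<alpha>)) (mu succ \<beta>)" unfolding \<alpha>_def .
    then have "succ (insert u \<alpha>) \<beta>" using co_parts(2)[OF co inK[unfolded K_def] b cardeq c2] by simp
    then show False using s1 strict_asym[OF st, of \<beta> "insert u \<alpha>"] by simp
  qed
  then have "u \<in> Vset G \<kappa> succ \<alpha>" using ua inK unfolding Vset_iff K_def by simp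
  then show ?thesis using s1 unfolding \<alpha>_def by simp
qed

lemma nth_notin_take:
  assumes d: "distinct vs" and j: "j < length vs" and ij: "i \<le> j"
  shows "vs ! j \<notin> set (take i vs)"
proof
  assume "vs ! j \<in> set (take i vs)"
  then obtain k where k: "k < length (take i vs)" "take i vs ! k = vs ! j" by (auto simp: in_set_conv_nth)
  then have ki: "k < i" "k < length vs" "vs ! k = vs ! j" by auto
  then have "k = j" using nth_eq_iff_index_eq[OF d ki(2) j] by simp
  then show False using ki ij by simp
qed

lemma greedy_step:
  assumes co: "constructed_order G \<kappa> succ"
    and a: "\<alpha> \<in> clique_complex G \<kappa>" and x: "x \<in> Vset G \<kappa> succ \<alpha>"
    and q: "q \<in> Vset G \<kappa> succ \<alpha>" "succ (insert x \<alpha>) (insert q \<alpha>)"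
  shows "\<exists>z. z \<in> Vset G \<kappa> succ \<alpha> \<and> z \<noteq> x \<and>
     (\<forall>a b. (a = x \<or> a = z \<or> (a \<in> Vset G \<kappa> succ \<alpha> \<and> succ (insert x \<alpha>) (insert a \<alpha>))) \<longrightarrow>
       (b = x \<or> b = z \<or> (b \<in> Vset G \<kappa> succ \<alpha> \<and> succ (insert x \<alpha>) (insert b \<alpha>))) \<longrightarrow>
         a \<noteq> b \<longrightarrow> cmod (G $$ (a,b) - 1) \<le> cmod (G $$ (x,z) - 1))"
proof -
  define V where "V = Vset G \<kappa> succ \<alpha>"
  have st: "strict_total_on (clique_complex G \<kappa>) succ" by (rule co_parts(1)[OF co])
  obtain vs where gs: "greedy_seq G V vs" and ord: "\<forall>i j. i < j \<longrightarrow> j < length vs \<longrightarrow> succ (insert (vs ! i) \<alpha>) (insert (vs ! j) \<alpha>)"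
    using co_parts(3)[OF co a] unfolding V_def by (elim exE conjE)
  note gsp = gs[unfolded greedy_seq_def]
  have dis: "distinct vs" using gsp by (rule conjunct1)
  have sv: "set vs = V" using gsp[THEN conjunct2] by (rule conjunct1)
  have gr: "\<forall>j. j + 1 < length vs \<longrightarrow>
        (let R = V - set (take j vs) in
          \<exists>z\<in>R. z \<noteq> vs ! j \<and>
            (\<forall>w\<in>R. \<forall>z'\<in>R. w \<noteq> z' \<longrightarrow> cmod (G $$ (w,z') - 1) \<le> cmod (G $$ (vs ! j, z) - 1)))"
    using gsp[THEN conjunct2] by (rule conjunct2)
  have "x \<in> set vs" using x sv unfolding V_def by simp
  then obtain i where i: "i < length vs" "vs ! i = x" by (auto simp: in_set_conv_nth)
  have later: "\<exists>j. j < length vs \<and> i < j \<and> vs ! j = p"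
    if p: "p \<in> V" "succ (insert x \<alpha>) (insert p \<alpha>)" for p
  proof -
    have "p \<in> set vs" using p sv by simp
    then obtain j where j: "j < length vs" "vs ! j = p" by (auto simp: in_set_conv_nth)
    have "j \<noteq> i"
    proof
      assume "j = i"
      then have "p = x" using i j by simp
      then show False using p(2) strict_irrefl[OF st] by metis
    qed
    moreover have "\<not> j < i"
    proof
      assume "j < i"
      then have "succ (insert (vs ! j) \<alpha>) (insert (vs ! i) \<alpha>)" using ord i(1) by blast
      then have "succ (insert p \<alpha>) (insert x \<alpha>)" using i j by simp
      then show False using p(2) strict_asym[OF st] by metis
    qed
    ultimately show ?thesis using j by auto
  qed
  obtain jq where "jq < length vs" "i < jq" using later[OF q[folded V_def]] by blast
  then have i1: "i + 1 < length vs" by simp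
  define R where "R = V - set (take i vs)"
  have "\<exists>z\<in>R. z \<noteq> vs ! i \<and>
            (\<forall>w\<in>R. \<forall>z'\<in>R. w \<noteq> z' \<longrightarrow> cmod (G $$ (w,z') - 1) \<le> cmod (G $$ (vs ! i, z) - 1))"
    using gr i1 unfolding R_def Let_def by blast
  then obtain z where z: "z \<in> R" "z \<noteq> x"
    "\<forall>w\<in>R. \<forall>z'\<in>R. w \<noteq> z' \<longrightarrow> cmod (G $$ (w,z') - 1) \<le> cmod (G $$ (x, z) - 1)"
    using i(2) by blast
  have xR: "x \<in> R" unfolding R_def using x nth_notin_take[OF dis i(1) order.refl] i(2) unfolding V_def by simp
  have qR: "p \<in> R" if hp: "p \<in> V" "succ (insert x \<alpha>) (insert p \<alpha>)" for p
  proof -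
    obtain j where j: "j < length vs" "i < j" "vs ! j = p" using later[OF hp] by blast
    have "p \<notin> set (take i vs)" using nth_notin_take[OF dis j(1), of i] j by simp
    then show ?thesis unfolding R_def using hp(1) by simp
  qed
  have zV: "z \<in> V" using z(1) unfolding R_def by simp
  have "\<forall>a b. (a = x \<or> a = z \<or> (a \<in> V \<and> succ (insert x \<alpha>) (insert a \<alpha>))) \<longrightarrow>
       (b = x \<or> b = z \<or> (b \<in> V \<and> succ (insert x \<alpha>) (insert b \<alpha>))) \<longrightarrow>
         a \<noteq> b \<longrightarrow> cmod (G $$ (a,b) - 1) \<le> cmod (G $$ (x,z) - 1)"
  proof (intro allI impI)
    fix a b assume ha: "a = x \<or> a = z \<or> (a \<in> V \<and> succ (insert x \<alpha>) (insert a \<alpha>))"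
      and hb: "b = x \<or> b = z \<or> (b \<in> V \<and> succ (insert x \<alpha>) (insert b \<alpha>))" and ab: "a \<noteq> b"
    have "a \<in> R" using ha xR z(1) qR by blast
    moreover have "b \<in> R" using hb xR z(1) qR by blast
    ultimately show "cmod (G $$ (a,b) - 1) \<le> cmod (G $$ (x,z) - 1)" using z(3) ab by blast
  qed
  then show ?thesis using zV z(2) unfolding V_def by blast
qed




theorem lemma10:
  fixes G :: "complex mat" and m r :: nat and \<kappa> :: real
    and succ :: "nat set \<Rightarrow> nat set \<Rightarrow> bool"
  assumes "G \<in> carrier_mat m m"
    and "\<forall>u<m. \<forall>v<m. G $$ (u,v) = G $$ (v,u)"
    and "\<forall>u<m. G $$ (u,u) = 1"
    and "vec_space.rank m G \<le> 2 * r"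
    and "0 < \<kappa>" and "\<kappa> < 1"
    and "\<forall>u<m. \<forall>v<m. cmod (G $$ (u,v) - 1) > \<kappa> \<or>
                      cmod (G $$ (u,v) - 1) < 2 powr (- 4 * (real r + 1)) * \<kappa>"
    and "constructed_order G \<kappa> succ"
    and "\<sigma> \<in> clique_complex G \<kappa>" and "\<tau> \<in> clique_complex G \<kappa>"
    and "card \<sigma> = r + 1" and "card \<tau> = r + 1"
    and "mu succ \<sigma> = mu succ \<tau>"
  shows "\<sigma> \<union> \<tau> \<in> clique_complex G \<kappa>"
proof -
  note Gc = assms(1) and sym = assms(2) and diag = assms(3) and rk = assms(4) and kp = assms(5,6)
    and dich = assms(7) and co = assms(8) and sK = assms(9) and tK = assms(10) and cs = assms(11)
    and ct = assms(12) and mueq = assms(13)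
  define K where "K = clique_complex G \<kappa>"
  define E where "E = (\<lambda>a b. G $$ (a,b) - 1)"
  define \<delta> where "\<delta> = 2 powr (- 4 * (real r + 1)) * \<kappa>"
  have dimG: "dim_row G = m" using Gc by simp
  have st: "strict_total_on K succ" unfolding K_def by (rule co_parts(1)[OF co])
  have rangeK: "\<And>s a. s \<in> K \<Longrightarrow> a \<in> s \<Longrightarrow> a < m" unfolding K_def using K_range dimG by metis
  have d0: "0 \<le> \<delta>" unfolding \<delta>_def using kp by simp
  have dich': "\<And>a b. a < m \<Longrightarrow> b < m \<Longrightarrow> \<kappa> < cmod (E a b) \<or> cmod (E a b) < \<delta>"
    using dich unfolding E_def \<delta>_def by blast
  have Eaa: "\<And>a. a < m \<Longrightarrow> cmod (E a a) \<le> \<delta>" unfolding E_def using diag d0 by simp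
  have adjK: "\<And>s a b. s \<in> K \<Longrightarrow> a \<in> s \<Longrightarrow> b \<in> s \<Longrightarrow> a \<noteq> b \<Longrightarrow> cmod (E a b) < \<kappa>"
    unfolding K_def E_def using K_adj by metis
  have closeK: "cmod (E a b) \<le> \<delta>" if "s \<in> K" "a \<in> s" "b \<in> s" for s a b
  proof (cases "a = b")
    case True then show ?thesis using Eaa rangeK that by blast
  next
    case False
    have "cmod (E a b) < \<kappa>" using adjK that False by blast
    then show ?thesis using dich'[OF rangeK[OF that(1,2)] rangeK[OF that(1,3)]] by linarith
  qed
  show ?thesis
  proof (cases "r = 0")
    case True
    then have "card \<sigma> = 1" using cs by simp
    then obtain u where u: "\<sigma> = {u}" by (rule card_1_singletonE)
    have um: "u < m" using rangeK[of \<sigma> u] sK u unfolding K_def by simp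
    have "vec_space.rank m G < card {u}" using rk True by simp
    then obtain c where c: "\<exists>b\<in>{u}. c b \<noteq> 0" "\<forall>a<m. (\<Sum>b\<in>{u}. G $$ (a,b) * c b) = 0"
      using exists_kernel[OF Gc, of "{u}"] um by blast
    have "G $$ (u,u) * c u = 0" using c(2) um by simp
    then have "c u = 0" using diag um by simp
    then show ?thesis using c(1) by simp
  next
    case False
    then have r1: "1 \<le> r" by simp
    define \<rho> where "\<rho> = mu succ \<sigma>"
    have c2s: "2 \<le> card \<sigma>" "2 \<le> card \<tau>" using cs ct r1 by auto
    have sK': "\<sigma> \<in> K" "\<tau> \<in> K" using sK tK unfolding K_def by auto
    have finst: "finite \<sigma>" "finite \<tau>" using sK tK K_finite by blast+
    have rf: "\<rho> \<in> facets \<sigma>" "\<rho> \<in> facets \<tau>"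
      using conjunct1[OF mu_prop[OF st[unfolded K_def] sK c2s(1)]] conjunct1[OF mu_prop[OF st[unfolded K_def] tK c2s(2)]] mueq
      unfolding \<rho>_def by simp_all
    obtain v where v: "v \<in> \<sigma>" "\<rho> = \<sigma> - {v}" using rf(1) by (rule facetE)
    obtain w where w: "w \<in> \<tau>" "\<rho> = \<tau> - {w}" using rf(2) by (rule facetE)
    have sig: "\<sigma> = insert v \<rho>" using v by auto
    have tau: "\<tau> = insert w \<rho>" using w by auto
    have vr: "v \<notin> \<rho>" and wr: "w \<notin> \<rho>" using v w by auto
    have rK: "\<rho> \<in> K" and cr: "card \<rho> = r" using facets_in_K[OF sK c2s(1) rf(1)] cs unfolding K_def by auto
    have vV: "v \<in> Vset G \<kappa> succ \<rho>" unfolding Vset_iff using vr sK sig[symmetric] \<rho>_def[symmetric] by simp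
    have wV: "w \<in> Vset G \<kappa> succ \<rho>" unfolding Vset_iff using wr tK tau[symmetric] \<rho>_def[symmetric] mueq by simp
    have vm: "v < m" and wm: "w < m" using rangeK sK' v(1) w(1) by auto
    show ?thesis
    proof (rule ccontr)
      assume nK: "\<sigma> \<union> \<tau> \<notin> clique_complex G \<kappa>"
      have vw_ne: "v \<noteq> w"
      proof
        assume "v = w"
        then have "\<sigma> \<union> \<tau> = \<sigma>" using sig tau by simp
        then show False using nK sK by simp
      qed
      have vwk: "\<kappa> \<le> cmod (E v w)"
      proof (rule ccontr)
        assume "\<not> \<kappa> \<le> cmod (E v w)"
        then have lt: "cmod (G $$ (v,w) - 1) < \<kappa>" "cmod (G $$ (w,v) - 1) < \<kappa>"
          using sym vm wm unfolding E_def by auto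
        have "\<sigma> \<union> \<tau> \<in> clique_complex G \<kappa>" unfolding K_mem
        proof (intro conjI ballI impI)
          show "\<sigma> \<union> \<tau> \<noteq> {}" using v by auto
          show "\<sigma> \<union> \<tau> \<subseteq> {0..<dim_row G}" using sK tK unfolding K_mem by auto
          fix a b assume ab: "a \<in> \<sigma> \<union> \<tau>" "b \<in> \<sigma> \<union> \<tau>" "a \<noteq> b"
          show "adj G \<kappa> a b"
          proof (cases "a \<in> \<sigma> \<and> b \<in> \<sigma>")
            case True then show ?thesis using sK ab(3) unfolding K_mem by blast
          next
            case F1: False
            show ?thesis
            proof (cases "a \<in> \<tau> \<and> b \<in> \<tau>")
              case True then show ?thesis using tK ab(3) unfolding K_mem by blast
            next
              case False
              then have "(a = v \<and> b = w) \<or> (a = w \<and> b = v)" using F1 ab sig tau by auto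
              then show ?thesis using lt ab(3) unfolding adj_def by auto
            qed
          qed
        qed
        then show False using nK by simp
      qed
      have wvk: "\<kappa> \<le> cmod (E w v)" using vwk sym vm wm unfolding E_def by simp
      define B where "B = (\<lambda>d. (mu succ ^^ d) \<rho>)"
      have Bsuc: "B (Suc d) = mu succ (B d)" for d unfolding B_def by simp
      have Bprop: "B d \<in> K \<and> card (B d) = r - d \<and> B d \<subseteq> \<rho> \<and> v \<in> Vset G \<kappa> succ (B d) \<and> w \<in> Vset G \<kappa> succ (B d)"
        if "d < r" for d
        using that
      proof (induction d)
        case 0 then show ?case using rK cr vV wV unfolding B_def by simp
      next
        case (Suc d)
        then have IH: "B d \<in> K" "card (B d) = r - d" "B d \<subseteq> \<rho>" "v \<in> Vset G \<kappa> succ (B d)" "w \<in> Vset G \<kappa> succ (B d)"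
          by auto
        have c2: "2 \<le> card (B d)" using IH(2) Suc.prems by simp
        have f: "mu succ (B d) \<in> facets (B d)" using conjunct1[OF mu_prop[OF st[unfolded K_def] IH(1)[unfolded K_def] c2]] .
        have fk: "mu succ (B d) \<in> K \<and> card (mu succ (B d)) = card (B d) - 1 \<and> mu succ (B d) \<subseteq> B d"
          using facets_in_K[OF IH(1)[unfolded K_def] c2 f] unfolding K_def .
        have "v \<in> Vset G \<kappa> succ (mu succ (B d))" using desc[OF co IH(1)[unfolded K_def] c2 IH(4)] by simp
        moreover have "w \<in> Vset G \<kappa> succ (mu succ (B d))" using desc[OF co IH(1)[unfolded K_def] c2 IH(5)] by simp
        ultimately show ?case using fk IH(2,3) unfolding Bsuc by auto
      qed
      define C where "C = (\<lambda>j. B (r - j))"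
      have Cprop: "C j \<in> K" "card (C j) = j" "C j \<subseteq> \<rho>" "v \<in> Vset G \<kappa> succ (C j)" "w \<in> Vset G \<kappa> succ (C j)"
        if "j \<in> {1..r}" for j
        using Bprop[of "r - j"] that unfolding C_def by auto
      have Cmu: "mu succ (C j) = C (j - 1)" if "j \<in> {2..r}" for j
      proof -
        have "r - (j - 1) = Suc (r - j)" using that by auto
        then show ?thesis unfolding C_def using Bsuc by simp
      qed
      have CK: "\<And>j. j \<in> {1..r} \<Longrightarrow> C j \<in> clique_complex G \<kappa>" using Cprop(1) unfolding K_def by blast
      have DV: "u \<in> Vset G \<kappa> succ (C (j - 1)) \<and> succ (C j) (insert u (C (j - 1)))"
        if j: "j \<in> {2..r}" and u: "u \<in> Vset G \<kappa> succ (C j)" for j u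
      proof -
        have j1: "j \<in> {1..r}" using j by auto
        have c2: "2 \<le> card (C j)" using Cprop(2)[OF j1] j by simp
        show ?thesis using desc[OF co CK[OF j1] c2 u] unfolding Cmu[OF j] .
      qed
      have Vmono: "u \<in> Vset G \<kappa> succ (C i)" if "1 \<le> i" "i + n \<le> r" "u \<in> Vset G \<kappa> succ (C (i + n))" for i n u
        using that
      proof (induction n)
        case 0 then show ?case by simp
      next
        case (Suc n)
        have "i + Suc n \<in> {2..r}" using Suc.prems by auto
        then have "u \<in> Vset G \<kappa> succ (C (i + n))" using DV[of "i + Suc n" u] Suc.prems by simp
        then show ?case using Suc.IH Suc.prems by simp
      qed
      have Vmono': "u \<in> Vset G \<kappa> succ (C i)" if "1 \<le> i" "i \<le> j" "j \<le> r" "u \<in> Vset G \<kappa> succ (C j)" for i j u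
        using Vmono[of i "j - i" u] that by simp
      have Cmono: "C i \<subseteq> C (i + n)" if "1 \<le> i" "i + n \<le> r" for i n
        using that
      proof (induction n)
        case 0 then show ?case by simp
      next
        case (Suc n)
        have j: "i + Suc n \<in> {2..r}" using Suc.prems by auto
        have "C (i + n) = mu succ (C (i + Suc n))" using Cmu[OF j] by simp
        also have "\<dots> \<subseteq> C (i + Suc n)"
        proof -
          have j1: "i + Suc n \<in> {1..r}" using j by auto
          have c2: "2 \<le> card (C (i + Suc n))" using Cprop(2)[OF j1] j by simp
          have "mu succ (C (i + Suc n)) \<in> facets (C (i + Suc n))"
            using conjunct1[OF mu_prop[OF st[unfolded K_def] CK[OF j1] c2]] .
          then show ?thesis by (rule facetE) auto
        qed
        finally show ?case using Suc.IH Suc.prems by auto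
      qed
      have Cmono': "C i \<subseteq> C j" if "1 \<le> i" "i \<le> j" "j \<le> r" for i j
        using Cmono[of i "j - i"] that by simp
      define x where "x = (\<lambda>j. SOME u. u \<in> C j \<and> (j = 1 \<longrightarrow> C 1 = {u}) \<and> (j \<noteq> 1 \<longrightarrow> C (j - 1) = C j - {u}))"
      have xex: "\<exists>u. u \<in> C j \<and> (j = 1 \<longrightarrow> C 1 = {u}) \<and> (j \<noteq> 1 \<longrightarrow> C (j - 1) = C j - {u})"
        if j: "j \<in> {1..r}" for j
      proof (cases "j = 1")
        case True
        have "card (C 1) = 1" using Cprop(2)[of 1] r1 by simp
        then obtain u where "C 1 = {u}" by (rule card_1_singletonE)
        then show ?thesis using True by auto
      next
        case False
        then have j2: "j \<in> {2..r}" using j by auto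
        have c2: "2 \<le> card (C j)" using Cprop(2)[OF j] j2 by simp
        have "mu succ (C j) \<in> facets (C j)"
          using conjunct1[OF mu_prop[OF st[unfolded K_def] CK[OF j] c2]] .
        then have "C (j - 1) \<in> facets (C j)" using Cmu[OF j2] by simp
        then obtain u where "u \<in> C j" "C (j - 1) = C j - {u}" by (rule facetE)
        then show ?thesis using False by auto
      qed
      have xprop: "x j \<in> C j \<and> (j = 1 \<longrightarrow> C 1 = {x j}) \<and> (j \<noteq> 1 \<longrightarrow> C (j - 1) = C j - {x j})"
        if "j \<in> {1..r}" for j
        unfolding x_def by (rule someI_ex[OF xex[OF that]])
      have xC: "x j \<in> C j" if "j \<in> {1..r}" for j using xprop[OF that] by blast
      have xrem: "C (j - 1) = C j - {x j}" if "j \<in> {2..r}" for j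
        using xprop[of j] that by auto
      have xnot: "x j \<notin> C (j - 1)" if "j \<in> {2..r}" for j using xrem[OF that] by blast
      have Cins: "C j = insert (x j) (C (j - 1))" if "j \<in> {2..r}" for j
        using xrem[OF that] xC[of j] that by auto
      have xV: "x j \<in> Vset G \<kappa> succ (C (j - 1))" if j: "j \<in> {2..r}" for j
      proof -
        have "insert (x j) (C (j - 1)) \<in> clique_complex G \<kappa>" using Cins[OF j] CK[of j] j by simp
        moreover have "mu succ (insert (x j) (C (j - 1))) = C (j - 1)" using Cins[OF j] Cmu[OF j] by simp
        ultimately show ?thesis unfolding Vset_iff using xnot[OF j] by simp
      qed
      have xin: "x i \<in> C j" if "1 \<le> i" "i \<le> j" "j \<le> r" for i j
        using xC[of i] Cmono'[OF that] that by auto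
      have Cr: "C r = \<rho>" unfolding C_def B_def by simp
      have xrho: "x j \<in> \<rho>" if "j \<in> {1..r}" for j using xin[of j r] that Cr by auto
      define P where "P = (\<lambda>k z. z \<in> Vset G \<kappa> succ (C (k - 1)) \<and> z \<noteq> x k \<and>
         (\<forall>a b. (a = x k \<or> a = z \<or> (a \<in> Vset G \<kappa> succ (C (k - 1)) \<and> succ (insert (x k) (C (k - 1))) (insert a (C (k - 1))))) \<longrightarrow>
           (b = x k \<or> b = z \<or> (b \<in> Vset G \<kappa> succ (C (k - 1)) \<and> succ (insert (x k) (C (k - 1))) (insert b (C (k - 1))))) \<longrightarrow>
             a \<noteq> b \<longrightarrow> cmod (G $$ (a,b) - 1) \<le> cmod (G $$ (x k, z) - 1)))"
      define z where "z = (\<lambda>k. SOME z. P k z)"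
      have zex: "\<exists>z. P k z" if k: "k \<in> {2..r}" for k
      proof -
        have k1: "k - 1 \<in> {1..r}" using k by auto
        have vk: "v \<in> Vset G \<kappa> succ (C k)" using Cprop(4)[of k] k by auto
        have "succ (C k) (insert v (C (k - 1)))" using DV[OF k vk] by blast
        then have "succ (insert (x k) (C (k - 1))) (insert v (C (k - 1)))" using Cins[OF k] by simp
        from greedy_step[OF co CK[OF k1] xV[OF k] Cprop(4)[OF k1] this] show ?thesis
          unfolding P_def by blast
      qed
      have zP: "P k (z k)" if "k \<in> {2..r}" for k unfolding z_def by (rule someI_ex[OF zex[OF that]])
      define D where "D = (\<lambda>k. cmod (E (x k) (z k)))"
      have zV: "z k \<in> Vset G \<kappa> succ (C (k - 1))" and zx: "z k \<noteq> x k" if "k \<in> {2..r}" for k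
        using zP[OF that] unfolding P_def by blast+
      have Mk: "cmod (E a b) \<le> D k"
        if k: "k \<in> {2..r}" and a: "a = x k \<or> a = z k \<or> a \<in> Vset G \<kappa> succ (C k)"
          and b: "b = x k \<or> b = z k \<or> b \<in> Vset G \<kappa> succ (C k)" and ab: "a \<noteq> b" for k a b
      proof -
        have later: "p \<in> Vset G \<kappa> succ (C (k - 1)) \<and> succ (insert (x k) (C (k - 1))) (insert p (C (k - 1)))"
          if "p \<in> Vset G \<kappa> succ (C k)" for p
          using DV[OF k that] Cins[OF k] by simp
        have "a = x k \<or> a = z k \<or> (a \<in> Vset G \<kappa> succ (C (k - 1)) \<and> succ (insert (x k) (C (k - 1))) (insert a (C (k - 1))))"
          using a later by blast
        moreover have "b = x k \<or> b = z k \<or> (b \<in> Vset G \<kappa> succ (C (k - 1)) \<and> succ (insert (x k) (C (k - 1))) (insert b (C (k - 1))))"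
          using b later by blast
        ultimately show ?thesis using zP[OF k] ab unfolding P_def D_def E_def by blast
      qed
      have rhoK: "\<rho> \<in> K" by (rule rK)
      have sigK: "insert v \<rho> \<in> K" and tauK: "insert w \<rho> \<in> K" using sK' sig tau by auto
      have zK: "insert (z k) (C (k - 1)) \<in> K" and znot: "z k \<notin> C (k - 1)" if "k \<in> {2..r}" for k
        using zV[OF that] unfolding Vset_iff K_def by auto
      have VK: "insert u (C j) \<in> K" if "u \<in> Vset G \<kappa> succ (C j)" for u j
        using that unfolding Vset_iff K_def by auto
      have xm: "x j < m" if "j \<in> {1..r}" for j using rangeK[OF rhoK xrho[OF that]] .
      have zm: "z k < m" if "k \<in> {2..r}" for k using rangeK[OF zK[OF that]] by simp
      have Dk: "\<kappa> \<le> D k" if k: "k \<in> {2..r}" for k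
      proof -
        have "v \<in> Vset G \<kappa> succ (C k)" "w \<in> Vset G \<kappa> succ (C k)" using Cprop(4,5)[of k] k by auto
        then have "cmod (E v w) \<le> D k" using Mk[OF k] vw_ne by blast
        then show ?thesis using vwk by linarith
      qed
      define T where "T = x ` {1..r} \<union> z ` {2..r} \<union> {v,w}"
      have Tcases: "P" if "b \<in> T" "\<And>j. j \<in> {1..r} \<Longrightarrow> b = x j \<Longrightarrow> P" "\<And>l. l \<in> {2..r} \<Longrightarrow> b = z l \<Longrightarrow> P"
        "b = v \<Longrightarrow> P" "b = w \<Longrightarrow> P" for b P
        using that unfolding T_def by blast
      have Tm: "b < m" if "b \<in> T" for b
        by (rule Tcases[OF that]) (use xm zm vm wm in auto)
      have rowx: "\<forall>k\<in>{2..r}. \<forall>b\<in>T-{z k}. cmod (E (x k) b) \<le> \<delta> \<or> (\<exists>l\<in>{2..<k}. b = z l \<and> cmod (E (x k) b) \<le> D l)"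
      proof (intro ballI)
        fix k b assume k: "k \<in> {2..r}" and b: "b \<in> T - {z k}"
        have k1: "k \<in> {1..r}" using k by auto
        show "cmod (E (x k) b) \<le> \<delta> \<or> (\<exists>l\<in>{2..<k}. b = z l \<and> cmod (E (x k) b) \<le> D l)"
        proof (rule Tcases[of b])
          show "b \<in> T" using b by blast
        next
          fix j assume "j \<in> {1..r}" "b = x j"
          then show ?thesis using closeK[OF rhoK xrho[OF k1] xrho] by auto
        next
          fix l assume l: "l \<in> {2..r}" "b = z l"
          have "l \<noteq> k" using b l by auto
          then consider "k < l" | "l < k" by linarith
          then show ?thesis
          proof cases
            case 1
            have "x k \<in> C (l - 1)" using xin[of k "l - 1"] k l 1 by auto
            then show ?thesis using closeK[OF zK[OF l(1)], of "x k" "z l"] l by auto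
          next
            case 2
            have "x k \<in> Vset G \<kappa> succ (C l)" using Vmono'[of l "k - 1" "x k"] xV[OF k] l 2 k by auto
            then have "x k = z l \<or> cmod (E (x k) (z l)) \<le> D l" using Mk[OF l(1), of "x k" "z l"] by blast
            then show ?thesis using Eaa[OF xm[OF k1]] l 2 by auto
          qed
        next
          assume "b = v" then show ?thesis using closeK[OF sigK, of "x k" v] xrho[OF k1] by auto
        next
          assume "b = w" then show ?thesis using closeK[OF tauK, of "x k" w] xrho[OF k1] by auto
        qed
      qed
      have rowv: "\<forall>b\<in>T-{w}. cmod (E v b) \<le> \<delta> \<or> (\<exists>l\<in>{2..r}. b = z l \<and> cmod (E v b) \<le> D l)"
      proof
        fix b assume b: "b \<in> T - {w}"
        show "cmod (E v b) \<le> \<delta> \<or> (\<exists>l\<in>{2..r}. b = z l \<and> cmod (E v b) \<le> D l)"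
        proof (rule Tcases[of b])
          show "b \<in> T" using b by blast
        next
          fix j assume "j \<in> {1..r}" "b = x j"
          then show ?thesis using closeK[OF sigK, of v "x j"] xrho by auto
        next
          fix l assume l: "l \<in> {2..r}" "b = z l"
          have "v \<in> Vset G \<kappa> succ (C l)" using Cprop(4)[of l] l by auto
          then have "v = z l \<or> cmod (E v (z l)) \<le> D l" using Mk[OF l(1), of v "z l"] by blast
          then show ?thesis using Eaa[OF vm] l by auto
        next
          assume "b = v" then show ?thesis using Eaa[OF vm] by auto
        next
          assume "b = w" then show ?thesis using b by auto
        qed
      qed
      have roww: "\<forall>b\<in>T-{v}. cmod (E w b) \<le> \<delta> \<or> (\<exists>l\<in>{2..r}. b = z l \<and> cmod (E w b) \<le> D l)"
      proof
        fix b assume b: "b \<in> T - {v}"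
        show "cmod (E w b) \<le> \<delta> \<or> (\<exists>l\<in>{2..r}. b = z l \<and> cmod (E w b) \<le> D l)"
        proof (rule Tcases[of b])
          show "b \<in> T" using b by blast
        next
          fix j assume "j \<in> {1..r}" "b = x j"
          then show ?thesis using closeK[OF tauK, of w "x j"] xrho by auto
        next
          fix l assume l: "l \<in> {2..r}" "b = z l"
          have "w \<in> Vset G \<kappa> succ (C l)" using Cprop(5)[of l] l by auto
          then have "w = z l \<or> cmod (E w (z l)) \<le> D l" using Mk[OF l(1), of w "z l"] by blast
          then show ?thesis using Eaa[OF wm] l by auto
        next
          assume "b = v" then show ?thesis using b by auto
        next
          assume "b = w" then show ?thesis using Eaa[OF wm] by auto
        qed
      qed
      have rowz: "\<forall>k\<in>{2..r}. \<forall>b\<in>T-{x k}. cmod (E (z k) b) \<le> \<delta> \<or>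
        (((\<exists>j\<in>{Suc k..r}. b = x j) \<or> (\<exists>l\<in>{Suc k..r}. b = z l) \<or> b = v \<or> b = w) \<and> cmod (E (z k) b) \<le> D k) \<or>
        (\<exists>l\<in>{2..<k}. b = z l \<and> cmod (E (z k) b) \<le> D l)"
      proof (intro ballI)
        fix k b assume k: "k \<in> {2..r}" and b: "b \<in> T - {x k}"
        have k1: "k \<in> {1..r}" using k by auto
        have zkm: "z k < m" using zm[OF k] .
        show "cmod (E (z k) b) \<le> \<delta> \<or>
        (((\<exists>j\<in>{Suc k..r}. b = x j) \<or> (\<exists>l\<in>{Suc k..r}. b = z l) \<or> b = v \<or> b = w) \<and> cmod (E (z k) b) \<le> D k) \<or>
        (\<exists>l\<in>{2..<k}. b = z l \<and> cmod (E (z k) b) \<le> D l)"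
        proof (rule Tcases[of b])
          show "b \<in> T" using b by blast
        next
          fix j assume j: "j \<in> {1..r}" "b = x j"
          have "j \<noteq> k" using b j by auto
          then consider "j < k" | "k < j" by linarith
          then show ?thesis
          proof cases
            case 1
            have "x j \<in> C (k - 1)" using xin[of j "k - 1"] k j 1 by auto
            then show ?thesis using closeK[OF zK[OF k], of "z k" "x j"] j by auto
          next
            case 2
            have j2: "j \<in> {2..r}" using j 2 k by auto
            have "x j \<in> Vset G \<kappa> succ (C k)" using Vmono'[of k "j - 1" "x j"] xV[OF j2] 2 k j by auto
            then have "z k = x j \<or> cmod (E (z k) (x j)) \<le> D k" using Mk[OF k, of "z k" "x j"] by blast
            then show ?thesis using Eaa[OF zkm] j 2 by auto
          qed
        next
          fix l assume l: "l \<in> {2..r}" "b = z l"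
          consider "l = k" | "k < l" | "l < k" by linarith
          then show ?thesis
          proof cases
            case 1 then show ?thesis using Eaa[OF zkm] l by auto
          next
            case 2
            have "z l \<in> Vset G \<kappa> succ (C k)" using Vmono'[of k "l - 1" "z l"] zV[OF l(1)] 2 k l by auto
            then have "z k = z l \<or> cmod (E (z k) (z l)) \<le> D k" using Mk[OF k, of "z k" "z l"] by blast
            then show ?thesis using Eaa[OF zkm] l 2 by auto
          next
            case 3
            have "z k \<in> Vset G \<kappa> succ (C l)" using Vmono'[of l "k - 1" "z k"] zV[OF k] 3 k l by auto
            then have "z k = z l \<or> cmod (E (z k) (z l)) \<le> D l" using Mk[OF l(1), of "z k" "z l"] by blast
            then show ?thesis using Eaa[OF zkm] l 3 by auto
          qed
        next
          assume bv: "b = v"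
          have "v \<in> Vset G \<kappa> succ (C k)" using Cprop(4)[OF k1] .
          then have "z k = v \<or> cmod (E (z k) v) \<le> D k" using Mk[OF k, of "z k" v] by blast
          then show ?thesis using Eaa[OF zkm] bv by auto
        next
          assume bw: "b = w"
          have "w \<in> Vset G \<kappa> succ (C k)" using Cprop(5)[OF k1] .
          then have "z k = w \<or> cmod (E (z k) w) \<le> D k" using Mk[OF k, of "z k" w] by blast
          then show ?thesis using Eaa[OF zkm] bw by auto
        qed
      qed
      have xinj: "inj_on x {1..r}"
      proof (rule inj_onI)
        have aux: "x i \<noteq> x j" if "i \<in> {1..r}" "j \<in> {1..r}" "i < j" for i j
        proof -
          have "x i \<in> C (j - 1)" using xin[of i "j - 1"] that by auto
          moreover have "x j \<notin> C (j - 1)" using xnot[of j] that by auto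
          ultimately show ?thesis by auto
        qed
        fix i j assume "i \<in> {1..r}" "j \<in> {1..r}" "x i = x j"
        then show "i = j" using aux[of i j] aux[of j i] by (cases i j rule: linorder_cases) auto
      qed
      have zinj: "inj_on z {2..r}"
      proof (rule inj_onI)
        have aux: "z k \<noteq> z l" if "k \<in> {2..r}" "l \<in> {2..r}" "k < l" for k l
        proof -
          have xk: "x k \<in> C (l - 1)" using xin[of k "l - 1"] that by auto
          then have "x k \<noteq> z l" using znot[of l] that(2) by auto
          then have lt: "cmod (E (x k) (z l)) < \<kappa>" using adjK[OF zK[OF that(2)], of "x k" "z l"] xk by simp
          have ge: "\<kappa> \<le> cmod (E (x k) (z k))" using Dk[OF that(1)] unfolding D_def .
          show ?thesis
          proof
            assume "z k = z l" then show False using lt ge by simp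
          qed
        qed
        fix i j assume "i \<in> {2..r}" "j \<in> {2..r}" "z i = z j"
        then show "i = j" using aux[of i j] aux[of j i] by (cases i j rule: linorder_cases) auto
      qed
      have xz: "x j \<noteq> z k" if j: "j \<in> {1..r}" and k: "k \<in> {2..r}" for j k
      proof -
        consider "j < k" | "j = k" | "k < j" by linarith
        then show ?thesis
        proof cases
          case 1
          have "x j \<in> C (k - 1)" using xin[of j "k - 1"] j k 1 by auto
          then show ?thesis using znot[OF k] by auto
        next
          case 2 then show ?thesis using zx[OF k] by auto
        next
          case 3
          have k1: "k \<in> {1..r}" using k by auto
          have "x k \<noteq> x j"
          proof
            assume "x k = x j"
            then have "k = j" using inj_onD[OF xinj _ k1 j] by simp
            then show False using 3 by simp
          qed
          then have lt: "cmod (E (x k) (x j)) < \<kappa>" using adjK[OF rhoK xrho[OF k1] xrho[OF j]] by simp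
          have ge: "\<kappa> \<le> cmod (E (x k) (z k))" using Dk[OF k] unfolding D_def .
          show ?thesis
          proof
            assume "x j = z k"
            then show False using lt ge by simp
          qed
        qed
      qed
      have vz: "z k \<noteq> v" "z k \<noteq> w" if k: "k \<in> {2..r}" for k
      proof -
        have k1: "k \<in> {1..r}" using k by auto
        have ne: "x k \<noteq> v" "x k \<noteq> w" using xrho[OF k1] vr wr by auto
        have l1: "cmod (E (x k) v) < \<kappa>" using adjK[OF sigK, of "x k" v] xrho[OF k1] ne by simp
        have l2: "cmod (E (x k) w) < \<kappa>" using adjK[OF tauK, of "x k" w] xrho[OF k1] ne by simp
        have ge: "\<kappa> \<le> cmod (E (x k) (z k))" using Dk[OF k] unfolding D_def .
        show "z k \<noteq> v"
        proof
          assume "z k = v" then show False using l1 ge by simp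
        qed
        show "z k \<noteq> w"
        proof
          assume "z k = w" then show False using l2 ge by simp
        qed
      qed
      have cardT: "card T = 2 * r + 1"
      proof -
        have c1: "card (x ` {1..r}) = r" using card_image[OF xinj] by simp
        have c2: "card (z ` {2..r}) = r - 1" using card_image[OF zinj] by simp
        have d1: "x ` {1..r} \<inter> z ` {2..r} = {}"
        proof (rule ccontr)
          assume "x ` {1..r} \<inter> z ` {2..r} \<noteq> {}"
          then obtain j k where "j \<in> {1..r}" "k \<in> {2..r}" "x j = z k" by blast
          then show False using xz by blast
        qed
        have c3: "card (x ` {1..r} \<union> z ` {2..r}) = r + (r - 1)"
          using card_Un_disjoint[OF _ _ d1] c1 c2 by simp
        have d2: "(x ` {1..r} \<union> z ` {2..r}) \<inter> {v, w} = {}"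
        proof (rule ccontr)
          assume "(x ` {1..r} \<union> z ` {2..r}) \<inter> {v, w} \<noteq> {}"
          then obtain b where b: "b \<in> x ` {1..r} \<union> z ` {2..r}" "b = v \<or> b = w" by blast
          show False
          proof (cases "b \<in> x ` {1..r}")
            case True
            then obtain j where "j \<in> {1..r}" "b = x j" by blast
            then show False using xrho[of j] vr wr b(2) by auto
          next
            case False
            then obtain k where "k \<in> {2..r}" "b = z k" using b(1) by blast
            then show False using vz[of k] b(2) by auto
          qed
        qed
        have "card T = card (x ` {1..r} \<union> z ` {2..r}) + card {v, w}"
          unfolding T_def by (rule card_Un_disjoint[OF _ _ d2]) auto
        then show ?thesis using c3 vw_ne r1 by simp
      qed
      have TsubM: "T \<subseteq> {..<m}" using Tm by auto
      have "vec_space.rank m G < card T" using rk cardT by simp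
      then obtain c where c: "\<exists>b\<in>T. c b \<noteq> 0" "\<forall>a<m. (\<Sum>b\<in>T. G $$ (a,b) * c b) = 0"
        using exists_kernel[OF Gc TsubM] by blast
      have finT: "finite T" unfolding T_def by simp
      have x1T: "x 1 \<in> T" unfolding T_def using r1 by auto
      define N where "N = (\<Sum>b\<in>T. cmod (c b))"
      have Npos: "0 < N"
      proof -
        obtain b0 where b0: "b0 \<in> T" "c b0 \<noteq> 0" using c(1) by blast
        have "cmod (c b0) \<le> N" unfolding N_def by (rule member_le_sum) (use b0 finT in auto)
        moreover have "0 < cmod (c b0)" using b0 by simp
        ultimately show ?thesis by linarith
      qed
      have x1close: "cmod (E (x 1) b) \<le> \<delta>" if b: "b \<in> T" for b
      proof -
        have r1': "1 \<in> {1..r}" using r1 by simp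
        show ?thesis
        proof (rule Tcases[OF b])
          fix j assume "j \<in> {1..r}" "b = x j"
          then show ?thesis using closeK[OF rhoK xrho[OF r1'] xrho] by auto
        next
          fix l assume l: "l \<in> {2..r}" "b = z l"
          have "x 1 \<in> C (l - 1)" using xin[of 1 "l - 1"] l by auto
          then show ?thesis using closeK[OF zK[OF l(1)], of "x 1" "z l"] l by auto
        next
          assume "b = v" then show ?thesis using closeK[OF sigK, of "x 1" v] xrho[OF r1'] by auto
        next
          assume "b = w" then show ?thesis using closeK[OF tauK, of "x 1" w] xrho[OF r1'] by auto
        qed
      qed
      have GE: "(\<Sum>b\<in>T. E a b * c b) = - (\<Sum>b\<in>T. c b)" if a: "a \<in> T" for a
      proof -
        have "0 = (\<Sum>b\<in>T. G $$ (a,b) * c b)" using c(2) Tm[OF a] by simp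
        also have "\<dots> = (\<Sum>b\<in>T. E a b * c b + c b)" unfolding E_def by (simp add: algebra_simps)
        also have "\<dots> = (\<Sum>b\<in>T. E a b * c b) + (\<Sum>b\<in>T. c b)" by (simp add: sum.distrib)
        finally show ?thesis by (simp add: eq_neg_iff_add_eq_0)
      qed
      have sumc: "cmod (\<Sum>b\<in>T. c b) \<le> \<delta> * N"
      proof -
        have "cmod (\<Sum>b\<in>T. c b) = cmod (\<Sum>b\<in>T. E (x 1) b * c b)" using GE[OF x1T] by simp
        also have "\<dots> \<le> (\<Sum>b\<in>T. cmod (E (x 1) b) * cmod (c b))"
          by (rule order.trans[OF norm_sum]) (simp add: norm_mult)
        also have "\<dots> \<le> (\<Sum>b\<in>T. \<delta> * cmod (c b))"
          by (rule sum_mono) (use x1close in \<open>auto intro: mult_right_mono\<close>)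
        also have "\<dots> = \<delta> * N" unfolding N_def by (simp add: sum_distrib_left)
        finally show ?thesis .
      qed
      have rowE: "\<forall>a\<in>T. cmod (\<Sum>b\<in>T. E a b * c b) \<le> \<delta> * N"
        using GE sumc by simp
      have dpow: "\<delta> * 2^(4*r+4) \<le> \<kappa>"
      proof -
        have "(2::real)^(4*r+4) = 2 powr (4 * (real r + 1))"
          by (simp add: powr_realpow[symmetric] algebra_simps)
        then have "2 powr (- 4 * (real r + 1)) * (2::real)^(4*r+4) = 2 powr (- 4 * (real r + 1)) * 2 powr (4 * (real r + 1))"
          by simp
        also have "\<dots> = 2 powr (- 4 * (real r + 1) + 4 * (real r + 1))" by (rule powr_add[symmetric])
        also have "\<dots> = 1" by simp
        finally have "2 powr (- 4 * (real r + 1)) * (2::real)^(4*r+4) = 1" .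
        then show ?thesis unfolding \<delta>_def by (simp add: mult.commute mult.left_commute)
      qed
      have Dk': "\<forall>k\<in>{2..r}. \<kappa> \<le> D k" using Dk by blast
      have big: "\<forall>k\<in>{2..r}. D k \<le> cmod (E (x k) (z k)) \<and> D k \<le> cmod (E (z k) (x k))"
      proof
        fix k assume k: "k \<in> {2..r}"
        have "E (z k) (x k) = E (x k) (z k)" unfolding E_def using sym zm[OF k] xm[of k] k by auto
        then show "D k \<le> cmod (E (x k) (z k)) \<and> D k \<le> cmod (E (z k) (x k))" unfolding D_def by simp
      qed
      show False
        using core[where E=E and c=c and x=x and z=z and v=v and w=w and D=D and \<kappa>=\<kappa> and \<delta>=\<delta> and r=r,
            folded T_def, OF r1 kp(1) _ d0 dpow Npos[unfolded N_def] sumc[unfolded N_def] rowE[unfolded N_def]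
            Dk' vwk wvk big rowx rowv roww rowz]
        using kp(2) by simp
    qed
  qed
qed


end
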